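(* Every invertible subalgebra $\mathcal A$ of $\mathrm{Mat}(\mathbb{Z}^D,p)$ is central, simple, and locally generated.
   Context: $\mathrm{Mat}(\mathbb{Z}^D,p)$ is the local operator algebra: for $p:\mathbb{Z}^D\to\mathbb{Z}_{>0}$ and finite $S\subset\mathbb{Z}^D$, $\mathrm{Mat}(S,p)=\bigotimes_{s\in S}M_{p(s)}(\mathbb{C})$ with embeddings by tensoring identities, and $\mathrm{Mat}(\mathbb{Z}^D,p)$ is the union (direct limit), a $*$-algebra. The support $\mathrm{Supp}(x)$ is the smallest finite $S$ with $x\in\mathrm{Mat}(S,p)$; scalars have empty support. $S^{+\ell}$ is the set of sites at $\ell_\infty$-distance at most $\ell$ from $S$. A unital $*$-subalgebra $\mathcal A$ is invertible if there is $\ell>0$ such that every $x\in\mathrm{Mat}(\mathbb{Z}^D,p)$ is a finite sum $x=\sum_ia_ib_i$ with $a_i\in\mathcal A$, $b_i$ in the commutant $\mathcal A'$ of $\mathcal A$ within $\mathrm{Mat}(\mathbb{Z}^D,p)$, and $\mathrm{Supp}(a_i),\mathrm{Supp}(b_i)\subseteq\mathrm{Supp}(x)^{+\ell}$. Central means only scalar multiples of $\mathbf 1$ commute with all elements; simple means no two-sided ideals other than $0$ and the whole algebra. A subalgebra is locally generated if for some $\ell>0$ it has a generating set whose elements all have support of diameter at most $\ell$. *)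

theory Defs
  imports "HOL-Analysis.Analysis" "HOL-Library.Function_Algebras"
begin

text \<open>Operators in Mat(Z^D,p) are modelled
as matrix kernels on the (infinite) configuration space, of the form
k(sigma|S, tau|S) * delta(sigma off S, tau off S) for a finite set S: this is exactly
the image of Mat(S,p) = tensor of M_p(s) under the embedding x |-> x (x) 1.\<close>

type_synonym site = "int list"
type_synonym conf = "site \<Rightarrow> nat"
type_synonym op = "conf \<Rightarrow> conf \<Rightarrow> complex"

definition sites :: "nat \<Rightarrow> site set" where
  "sites D = {s. length s = D}"

definition Conf :: "nat \<Rightarrow> (site \<Rightarrow> nat) \<Rightarrow> conf set" where
  "Conf D p = {\<sigma>. \<forall>s. (s \<in> sites D \<longrightarrow> \<sigma> s < p s) \<and> (s \<notin> sites D \<longrightarrow> \<sigma> s = 0)}"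

text \<open>x belongs to Mat(S,p) (embedded in Mat(Z^D,p)).\<close>
definition is_local :: "nat \<Rightarrow> (site \<Rightarrow> nat) \<Rightarrow> site set \<Rightarrow> op \<Rightarrow> bool" where
  "is_local D p S x \<longleftrightarrow> finite S \<and> S \<subseteq> sites D \<and>
     (\<forall>\<sigma> \<tau>. x \<sigma> \<tau> \<noteq> 0 \<longrightarrow> \<sigma> \<in> Conf D p \<and> \<tau> \<in> Conf D p \<and> (\<forall>s \<in> sites D - S. \<sigma> s = \<tau> s)) \<and>
     (\<forall>\<sigma> \<tau> \<sigma>' \<tau>'. \<sigma> \<in> Conf D p \<longrightarrow> \<tau> \<in> Conf D p \<longrightarrow> \<sigma>' \<in> Conf D p \<longrightarrow> \<tau>' \<in> Conf D p \<longrightarrow>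
        (\<forall>s \<in> S. \<sigma> s = \<sigma>' s \<and> \<tau> s = \<tau>' s) \<longrightarrow>
        (\<forall>s \<in> sites D - S. \<sigma> s = \<tau> s \<and> \<sigma>' s = \<tau>' s) \<longrightarrow> x \<sigma> \<tau> = x \<sigma>' \<tau>')"

definition Mat :: "nat \<Rightarrow> (site \<Rightarrow> nat) \<Rightarrow> op set" where
  "Mat D p = {x. \<exists>S. is_local D p S x}"

definition Supp :: "nat \<Rightarrow> (site \<Rightarrow> nat) \<Rightarrow> op \<Rightarrow> site set" where
  "Supp D p x = \<Inter> {S. is_local D p S x}"

text \<open>Algebra operations (addition is pointwise + on functions).\<close>
definition op_mult :: "op \<Rightarrow> op \<Rightarrow> op" where
  "op_mult x y = (\<lambda>\<sigma> \<tau>. infsum (\<lambda>\<rho>. x \<sigma> \<rho> * y \<rho> \<tau>) UNIV)"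

definition op_adj :: "op \<Rightarrow> op" where
  "op_adj x = (\<lambda>\<sigma> \<tau>. cnj (x \<tau> \<sigma>))"

definition op_scale :: "complex \<Rightarrow> op \<Rightarrow> op" where
  "op_scale c x = (\<lambda>\<sigma> \<tau>. c * x \<sigma> \<tau>)"

definition op_one :: "nat \<Rightarrow> (site \<Rightarrow> nat) \<Rightarrow> op" where
  "op_one D p = (\<lambda>\<sigma> \<tau>. if \<sigma> = \<tau> \<and> \<sigma> \<in> Conf D p then 1 else 0)"

definition linf_dist :: "site \<Rightarrow> site \<Rightarrow> int" where
  "linf_dist s t = Max (insert 0 {\<bar>s ! i - t ! i\<bar> | i. i < min (length s) (length t)})"

definition thicken :: "nat \<Rightarrow> site set \<Rightarrow> nat \<Rightarrow> site set" where
  "thicken D S l = {t \<in> sites D. \<exists>s \<in> S. linf_dist s t \<le> int l}"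

definition diam_le :: "site set \<Rightarrow> nat \<Rightarrow> bool" where
  "diam_le S l \<longleftrightarrow> (\<forall>s \<in> S. \<forall>t \<in> S. linf_dist s t \<le> int l)"

definition unital_star_subalg :: "nat \<Rightarrow> (site \<Rightarrow> nat) \<Rightarrow> op set \<Rightarrow> bool" where
  "unital_star_subalg D p A \<longleftrightarrow> A \<subseteq> Mat D p \<and> op_one D p \<in> A \<and>
     (\<forall>x \<in> A. \<forall>y \<in> A. x + y \<in> A \<and> op_mult x y \<in> A) \<and>
     (\<forall>c. \<forall>x \<in> A. op_scale c x \<in> A) \<and> (\<forall>x \<in> A. op_adj x \<in> A)"

definition commutant :: "nat \<Rightarrow> (site \<Rightarrow> nat) \<Rightarrow> op set \<Rightarrow> op set" where
  "commutant D p A = {y \<in> Mat D p. \<forall>a \<in> A. op_mult a y = op_mult y a}"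

definition invertible_subalg :: "nat \<Rightarrow> (site \<Rightarrow> nat) \<Rightarrow> op set \<Rightarrow> bool" where
  "invertible_subalg D p A \<longleftrightarrow> unital_star_subalg D p A \<and>
     (\<exists>l>0. \<forall>x \<in> Mat D p. \<exists>(n::nat) a b.
        (\<forall>i<n. a i \<in> A \<and> b i \<in> commutant D p A \<and>
               Supp D p (a i) \<subseteq> thicken D (Supp D p x) l \<and>
               Supp D p (b i) \<subseteq> thicken D (Supp D p x) l) \<and>
        x = (\<Sum>i<n. op_mult (a i) (b i)))"

definition central_subalg :: "nat \<Rightarrow> (site \<Rightarrow> nat) \<Rightarrow> op set \<Rightarrow> bool" where
  "central_subalg D p A \<longleftrightarrow>
     (\<forall>x \<in> A. (\<forall>y \<in> A. op_mult x y = op_mult y x) \<longrightarrow> (\<exists>c. x = op_scale c (op_one D p)))"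

definition two_sided_ideal :: "op set \<Rightarrow> op set \<Rightarrow> bool" where
  "two_sided_ideal A I \<longleftrightarrow> I \<subseteq> A \<and> 0 \<in> I \<and>
     (\<forall>x \<in> I. \<forall>y \<in> I. x - y \<in> I) \<and>
     (\<forall>a \<in> A. \<forall>x \<in> I. op_mult a x \<in> I \<and> op_mult x a \<in> I)"

definition simple_subalg :: "op set \<Rightarrow> bool" where
  "simple_subalg A \<longleftrightarrow> (\<forall>I. two_sided_ideal A I \<longrightarrow> I = {0} \<or> I = A)"

definition generated_subalg :: "nat \<Rightarrow> (site \<Rightarrow> nat) \<Rightarrow> op set \<Rightarrow> op set" where
  "generated_subalg D p G = \<Inter> {B. unital_star_subalg D p B \<and> G \<subseteq> B}"

definition locally_generated :: "nat \<Rightarrow> (site \<Rightarrow> nat) \<Rightarrow> op set \<Rightarrow> bool" where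
  "locally_generated D p A \<longleftrightarrow>
     (\<exists>l>0. \<exists>G \<subseteq> A. (\<forall>g \<in> G. diam_le (Supp D p g) l) \<and> A = generated_subalg D p G)"

end

theory Submission
  imports Defs
begin
lemma sum_apply2: "(\<Sum>k\<in>K. (f k :: op)) \<sigma> \<tau> = (\<Sum>k\<in>K. f k \<sigma> \<tau>)"
  by (induction K rule: infinite_finite_induct) auto

lemma sum_list_apply2: "(sum_list (xs :: op list)) \<sigma> \<tau> = sum_list (map (\<lambda>f. f \<sigma> \<tau>) xs)"
  by (induction xs) auto

locale lat =
  fixes D :: nat and p :: "site \<Rightarrow> nat"
  assumes pos: "\<forall>s \<in> sites D. p s > 0"
begin

abbreviation "Cf \<equiv> Conf D p"
abbreviation "M \<equiv> Mat D p"
abbreviation "one \<equiv> op_one D p"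
abbreviation "loc \<equiv> is_local D p"

definition Nb :: "site set \<Rightarrow> conf \<Rightarrow> conf set" where
  "Nb U \<sigma> = {\<rho> \<in> Cf. \<forall>s. s \<notin> U \<longrightarrow> \<rho> s = \<sigma> s}"

definition glue :: "site set \<Rightarrow> conf \<Rightarrow> conf \<Rightarrow> conf" where
  "glue U \<sigma> \<alpha> = (\<lambda>s. if s \<in> U then \<alpha> s else \<sigma> s)"

lemma Conf_off: "\<sigma> \<in> Cf \<Longrightarrow> s \<notin> sites D \<Longrightarrow> \<sigma> s = 0"
  by (simp add: Conf_def)
lemma Conf_on: "\<sigma> \<in> Cf \<Longrightarrow> s \<in> sites D \<Longrightarrow> \<sigma> s < p s"
  by (simp add: Conf_def)

lemma zero_Conf: "(\<lambda>_. 0) \<in> Cf"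
  using pos by (auto simp: Conf_def)

lemma glue_Conf: "\<sigma> \<in> Cf \<Longrightarrow> \<rho> \<in> Cf \<Longrightarrow> glue U \<sigma> \<rho> \<in> Cf"
  by (auto simp: Conf_def glue_def)

lemma loc_fin: "loc U x \<Longrightarrow> finite U" and loc_sub: "loc U x \<Longrightarrow> U \<subseteq> sites D"
  by (auto simp: is_local_def)

lemma loc_nz: assumes "loc U x" "x \<sigma> \<tau> \<noteq> 0"
  shows "\<sigma> \<in> Cf \<and> \<tau> \<in> Cf \<and> (\<forall>s. s \<notin> U \<longrightarrow> \<sigma> s = \<tau> s)"
proof -
  have h: "\<sigma> \<in> Cf" "\<tau> \<in> Cf" "\<forall>s \<in> sites D - U. \<sigma> s = \<tau> s"
    using assms unfolding is_local_def by blast+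
  have "\<sigma> s = \<tau> s" if "s \<notin> U" for s
  proof (cases "s \<in> sites D")
    case True then show ?thesis using h(3) that by blast
  next
    case False then show ?thesis using Conf_off[OF h(1) False] Conf_off[OF h(2) False] by simp
  qed
  then show ?thesis using h by blast
qed

lemma loc_eq: assumes "loc U x" "\<sigma> \<in> Cf" "\<tau> \<in> Cf" "\<sigma>' \<in> Cf" "\<tau>' \<in> Cf"
   "\<forall>s\<in>U. \<sigma> s = \<sigma>' s \<and> \<tau> s = \<tau>' s" "\<forall>s. s \<notin> U \<longrightarrow> \<sigma> s = \<tau> s" "\<forall>s. s \<notin> U \<longrightarrow> \<sigma>' s = \<tau>' s"
  shows "x \<sigma> \<tau> = x \<sigma>' \<tau>'"
proof -
  have c2: "\<forall>\<sigma> \<tau> \<sigma>' \<tau>'. \<sigma> \<in> Cf \<longrightarrow> \<tau> \<in> Cf \<longrightarrow> \<sigma>' \<in> Cf \<longrightarrow> \<tau>' \<in> Cf \<longrightarrow>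
        (\<forall>s \<in> U. \<sigma> s = \<sigma>' s \<and> \<tau> s = \<tau>' s) \<longrightarrow>
        (\<forall>s \<in> sites D - U. \<sigma> s = \<tau> s \<and> \<sigma>' s = \<tau>' s) \<longrightarrow> x \<sigma> \<tau> = x \<sigma>' \<tau>'"
    using assms(1) unfolding is_local_def by blast
  have "\<forall>s \<in> sites D - U. \<sigma> s = \<tau> s \<and> \<sigma>' s = \<tau>' s" using assms(7,8) by blast
  then show ?thesis using c2 assms(2-6) by blast
qed

lemma loc_intro:
  assumes "finite U" "U \<subseteq> sites D"
    "\<And>\<sigma> \<tau>. x \<sigma> \<tau> \<noteq> 0 \<Longrightarrow> \<sigma> \<in> Cf \<and> \<tau> \<in> Cf \<and> (\<forall>s. s \<notin> U \<longrightarrow> \<sigma> s = \<tau> s)"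
    "\<And>\<sigma> \<tau> \<sigma>' \<tau>'. \<sigma> \<in> Cf \<Longrightarrow> \<tau> \<in> Cf \<Longrightarrow> \<sigma>' \<in> Cf \<Longrightarrow> \<tau>' \<in> Cf \<Longrightarrow>
       \<forall>s\<in>U. \<sigma> s = \<sigma>' s \<and> \<tau> s = \<tau>' s \<Longrightarrow> \<forall>s. s \<notin> U \<longrightarrow> \<sigma> s = \<tau> s \<Longrightarrow> \<forall>s. s \<notin> U \<longrightarrow> \<sigma>' s = \<tau>' s
       \<Longrightarrow> x \<sigma> \<tau> = x \<sigma>' \<tau>'"
  shows "loc U x"
proof -
  have c1: "\<forall>\<sigma> \<tau>. x \<sigma> \<tau> \<noteq> 0 \<longrightarrow> \<sigma> \<in> Cf \<and> \<tau> \<in> Cf \<and> (\<forall>s \<in> sites D - U. \<sigma> s = \<tau> s)"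
    using assms(3) by blast
  have c2: "\<forall>\<sigma> \<tau> \<sigma>' \<tau>'. \<sigma> \<in> Cf \<longrightarrow> \<tau> \<in> Cf \<longrightarrow> \<sigma>' \<in> Cf \<longrightarrow> \<tau>' \<in> Cf \<longrightarrow>
        (\<forall>s \<in> U. \<sigma> s = \<sigma>' s \<and> \<tau> s = \<tau>' s) \<longrightarrow>
        (\<forall>s \<in> sites D - U. \<sigma> s = \<tau> s \<and> \<sigma>' s = \<tau>' s) \<longrightarrow> x \<sigma> \<tau> = x \<sigma>' \<tau>'"
  proof (intro allI impI)
    fix \<sigma> \<tau> \<sigma>' \<tau>'
    assume a: "\<sigma> \<in> Cf" "\<tau> \<in> Cf" "\<sigma>' \<in> Cf" "\<tau>' \<in> Cf"
      "\<forall>s\<in>U. \<sigma> s = \<sigma>' s \<and> \<tau> s = \<tau>' s" "\<forall>s\<in>sites D - U. \<sigma> s = \<tau> s \<and> \<sigma>' s = \<tau>' s"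
    have "\<sigma> s = \<tau> s \<and> \<sigma>' s = \<tau>' s" if "s \<notin> U" for s
    proof (cases "s \<in> sites D")
      case True then show ?thesis using a(6) that by blast
    next
      case False then show ?thesis using Conf_off[OF a(1) False] Conf_off[OF a(2) False]
          Conf_off[OF a(3) False] Conf_off[OF a(4) False] by simp
    qed
    then show "x \<sigma> \<tau> = x \<sigma>' \<tau>'" using assms(4)[OF a(1-5)] by blast
  qed
  show ?thesis unfolding is_local_def using assms(1,2) c1 c2 by blast
qed

lemma Nb_finite: assumes "finite U" shows "finite (Nb U \<sigma>)"
proof (rule inj_on_finite[where f="\<lambda>\<rho>. restrict \<rho> U"])
  show "inj_on (\<lambda>\<rho>. restrict \<rho> U) (Nb U \<sigma>)"
  proof (rule inj_onI)
    fix a b assume ab: "a \<in> Nb U \<sigma>" "b \<in> Nb U \<sigma>" "restrict a U = restrict b U"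
    show "a = b"
    proof
      fix s show "a s = b s"
      proof (cases "s \<in> U")
        case True then show ?thesis using ab(3) by (metis restrict_apply')
      next
        case False then show ?thesis using ab(1,2) by (simp add: Nb_def)
      qed
    qed
  qed
  show "(\<lambda>\<rho>. restrict \<rho> U) ` Nb U \<sigma> \<subseteq> PiE U (\<lambda>s. {..p s})"
  proof (rule image_subsetI)
    fix \<rho> assume r: "\<rho> \<in> Nb U \<sigma>"
    then have "\<rho> \<in> Cf" by (simp add: Nb_def)
    then have "\<rho> s \<le> p s" for s by (cases "s \<in> sites D") (auto simp: Conf_def less_imp_le_nat)
    then show "restrict \<rho> U \<in> PiE U (\<lambda>s. {..p s})" by (simp add: PiE_iff)
  qed
  show "finite (PiE U (\<lambda>s. {..p s}))" using assms by (simp add: finite_PiE)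
qed

lemma Nb_eq: "\<forall>s. s \<notin> U \<longrightarrow> \<sigma> s = \<sigma>' s \<Longrightarrow> Nb U \<sigma> = Nb U \<sigma>'"
  unfolding Nb_def by auto

lemma Nb_mem_eq: "\<rho> \<in> Nb U \<sigma> \<Longrightarrow> Nb U \<rho> = Nb U \<sigma>"
  unfolding Nb_def by auto

lemma MS: assumes "loc U x"
  shows "op_mult x y \<sigma> \<tau> = (\<Sum>\<rho>\<in>Nb U \<sigma>. x \<sigma> \<rho> * y \<rho> \<tau>)"
proof -
  have "op_mult x y \<sigma> \<tau> = infsum (\<lambda>\<rho>. x \<sigma> \<rho> * y \<rho> \<tau>) (Nb U \<sigma>)"
    unfolding op_mult_def
  proof (rule infsum_cong_neutral)
    fix \<rho> assume "\<rho> \<in> UNIV - Nb U \<sigma>"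
    then have "\<rho> \<notin> Nb U \<sigma>" by simp
    have "x \<sigma> \<rho> = 0"
    proof (rule ccontr)
      assume "x \<sigma> \<rho> \<noteq> 0"
      from loc_nz[OF assms this] have "\<rho> \<in> Nb U \<sigma>" by (auto simp: Nb_def)
      then show False using \<open>\<rho> \<notin> Nb U \<sigma>\<close> by simp
    qed
    then show "x \<sigma> \<rho> * y \<rho> \<tau> = 0" by simp
  qed auto
  then show ?thesis using Nb_finite[OF loc_fin[OF assms]] by simp
qed

lemma MS': assumes "loc U y"
  shows "op_mult x y \<sigma> \<tau> = (\<Sum>\<rho>\<in>Nb U \<tau>. x \<sigma> \<rho> * y \<rho> \<tau>)"
proof -
  have "op_mult x y \<sigma> \<tau> = infsum (\<lambda>\<rho>. x \<sigma> \<rho> * y \<rho> \<tau>) (Nb U \<tau>)"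
    unfolding op_mult_def
  proof (rule infsum_cong_neutral)
    fix \<rho> assume "\<rho> \<in> UNIV - Nb U \<tau>"
    then have "\<rho> \<notin> Nb U \<tau>" by simp
    have "y \<rho> \<tau> = 0"
    proof (rule ccontr)
      assume "y \<rho> \<tau> \<noteq> 0"
      from loc_nz[OF assms this] have "\<rho> \<in> Nb U \<tau>" by (auto simp: Nb_def)
      then show False using \<open>\<rho> \<notin> Nb U \<tau>\<close> by simp
    qed
    then show "x \<sigma> \<rho> * y \<rho> \<tau> = 0" by simp
  qed auto
  then show ?thesis using Nb_finite[OF loc_fin[OF assms]] by simp
qed

end

context lat begin

lemma loc_nz0: "loc U x \<Longrightarrow> \<not> (\<sigma> \<in> Cf \<and> \<tau> \<in> Cf \<and> (\<forall>s. s \<notin> U \<longrightarrow> \<sigma> s = \<tau> s)) \<Longrightarrow> x \<sigma> \<tau> = 0"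
  using loc_nz by blast

lemma loc_mono: assumes "loc U x" "U \<subseteq> V" "finite V" "V \<subseteq> sites D" shows "loc V x"
proof (rule loc_intro[OF assms(3,4)])
  fix \<sigma> \<tau> assume "x \<sigma> \<tau> \<noteq> 0"
  from loc_nz[OF assms(1) this] assms(2)
  show "\<sigma> \<in> Cf \<and> \<tau> \<in> Cf \<and> (\<forall>s. s \<notin> V \<longrightarrow> \<sigma> s = \<tau> s)" by blast
next
  fix \<sigma> \<tau> \<sigma>' \<tau>'
  assume a: "\<sigma> \<in> Cf" "\<tau> \<in> Cf" "\<sigma>' \<in> Cf" "\<tau>' \<in> Cf"
       "\<forall>s\<in>V. \<sigma> s = \<sigma>' s \<and> \<tau> s = \<tau>' s" "\<forall>s. s \<notin> V \<longrightarrow> \<sigma> s = \<tau> s" "\<forall>s. s \<notin> V \<longrightarrow> \<sigma>' s = \<tau>' s"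
  show "x \<sigma> \<tau> = x \<sigma>' \<tau>'"
  proof (cases "\<forall>s. s \<notin> U \<longrightarrow> \<sigma> s = \<tau> s")
    case True
    have "\<forall>s. s \<notin> U \<longrightarrow> \<sigma>' s = \<tau>' s"
    proof (intro allI impI)
      fix s assume "s \<notin> U"
      show "\<sigma>' s = \<tau>' s"
      proof (cases "s \<in> V")
        case True then show ?thesis using a(5) \<open>s \<notin> U\<close> \<open>\<forall>s. s \<notin> U \<longrightarrow> \<sigma> s = \<tau> s\<close> by metis
      next
        case False then show ?thesis using a(7) by blast
      qed
    qed
    then show ?thesis using loc_eq[OF assms(1) a(1-4)] a(5) True assms(2) by blast
  next
    case False
    then obtain s where s: "s \<notin> U" "\<sigma> s \<noteq> \<tau> s" by blast
    then have "s \<in> V" using a(6) by blast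
    then have "\<sigma>' s \<noteq> \<tau>' s" using a(5) s by metis
    then have "x \<sigma>' \<tau>' = 0" using loc_nz0[OF assms(1)] s(1) by blast
    moreover have "x \<sigma> \<tau> = 0" using loc_nz0[OF assms(1)] s by blast
    ultimately show ?thesis by simp
  qed
qed

lemma loc_zero: "finite U \<Longrightarrow> U \<subseteq> sites D \<Longrightarrow> loc U 0"
  by (rule loc_intro) auto

lemma loc_one: assumes "finite U" "U \<subseteq> sites D" shows "loc U one"
proof (rule loc_intro[OF assms])
  fix \<sigma> \<tau> assume "one \<sigma> \<tau> \<noteq> 0"
  then show "\<sigma> \<in> Cf \<and> \<tau> \<in> Cf \<and> (\<forall>s. s \<notin> U \<longrightarrow> \<sigma> s = \<tau> s)"
    by (auto simp: op_one_def split: if_splits)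
next
  fix \<sigma> \<tau> \<sigma>' \<tau>'
  assume a: "\<sigma> \<in> Cf" "\<tau> \<in> Cf" "\<sigma>' \<in> Cf" "\<tau>' \<in> Cf"
       "\<forall>s\<in>U. \<sigma> s = \<sigma>' s \<and> \<tau> s = \<tau>' s" "\<forall>s. s \<notin> U \<longrightarrow> \<sigma> s = \<tau> s" "\<forall>s. s \<notin> U \<longrightarrow> \<sigma>' s = \<tau>' s"
  have "(\<sigma> = \<tau>) = (\<sigma>' = \<tau>')"
  proof
    assume "\<sigma> = \<tau>" then show "\<sigma>' = \<tau>'" using a(5,7) by (metis ext)
  next
    assume "\<sigma>' = \<tau>'" then show "\<sigma> = \<tau>" using a(5,6) by (metis ext)
  qed
  then show "one \<sigma> \<tau> = one \<sigma>' \<tau>'" using a by (simp add: op_one_def)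
qed

lemma loc_add: assumes "loc U x" "loc U y" shows "loc U (x + y)"
proof (rule loc_intro[OF loc_fin[OF assms(1)] loc_sub[OF assms(1)]])
  fix \<sigma> \<tau> assume "(x + y) \<sigma> \<tau> \<noteq> 0"
  then have "x \<sigma> \<tau> \<noteq> 0 \<or> y \<sigma> \<tau> \<noteq> 0" by auto
  then show "\<sigma> \<in> Cf \<and> \<tau> \<in> Cf \<and> (\<forall>s. s \<notin> U \<longrightarrow> \<sigma> s = \<tau> s)"
    using loc_nz[OF assms(1)] loc_nz[OF assms(2)] by blast
next
  fix \<sigma> \<tau> \<sigma>' \<tau>'
  assume a: "\<sigma> \<in> Cf" "\<tau> \<in> Cf" "\<sigma>' \<in> Cf" "\<tau>' \<in> Cf"
       "\<forall>s\<in>U. \<sigma> s = \<sigma>' s \<and> \<tau> s = \<tau>' s" "\<forall>s. s \<notin> U \<longrightarrow> \<sigma> s = \<tau> s" "\<forall>s. s \<notin> U \<longrightarrow> \<sigma>' s = \<tau>' s"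
  show "(x + y) \<sigma> \<tau> = (x + y) \<sigma>' \<tau>'"
    using loc_eq[OF assms(1) a] loc_eq[OF assms(2) a] by simp
qed

lemma loc_scale: assumes "loc U x" shows "loc U (op_scale c x)"
proof (rule loc_intro[OF loc_fin[OF assms(1)] loc_sub[OF assms(1)]])
  fix \<sigma> \<tau> assume "op_scale c x \<sigma> \<tau> \<noteq> 0"
  then have "x \<sigma> \<tau> \<noteq> 0" by (auto simp: op_scale_def)
  then show "\<sigma> \<in> Cf \<and> \<tau> \<in> Cf \<and> (\<forall>s. s \<notin> U \<longrightarrow> \<sigma> s = \<tau> s)"
    using loc_nz[OF assms(1)] by blast
next
  fix \<sigma> \<tau> \<sigma>' \<tau>'
  assume a: "\<sigma> \<in> Cf" "\<tau> \<in> Cf" "\<sigma>' \<in> Cf" "\<tau>' \<in> Cf"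
       "\<forall>s\<in>U. \<sigma> s = \<sigma>' s \<and> \<tau> s = \<tau>' s" "\<forall>s. s \<notin> U \<longrightarrow> \<sigma> s = \<tau> s" "\<forall>s. s \<notin> U \<longrightarrow> \<sigma>' s = \<tau>' s"
  show "op_scale c x \<sigma> \<tau> = op_scale c x \<sigma>' \<tau>'"
    using loc_eq[OF assms(1) a] by (simp add: op_scale_def)
qed

lemma op_scale_m1: "op_scale (-1) x = - x"
  by (simp add: op_scale_def fun_eq_iff)

lemma loc_uminus: "loc U x \<Longrightarrow> loc U (- x)"
  using loc_scale[of U x "-1"] by (simp add: op_scale_m1)

lemma loc_diff: "loc U x \<Longrightarrow> loc U y \<Longrightarrow> loc U (x - y)"
  using loc_add[of U x "- y"] loc_uminus[of U y] by simp

lemma loc_sum: "finite U \<Longrightarrow> U \<subseteq> sites D \<Longrightarrow> (\<And>k. k \<in> K \<Longrightarrow> loc U (f k)) \<Longrightarrow> loc U (\<Sum>k\<in>K. f k)"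
  by (induction K rule: infinite_finite_induct) (auto intro: loc_zero loc_add)

lemma loc_adj: assumes "loc U x" shows "loc U (op_adj x)"
proof (rule loc_intro[OF loc_fin[OF assms(1)] loc_sub[OF assms(1)]])
  fix \<sigma> \<tau> assume "op_adj x \<sigma> \<tau> \<noteq> 0"
  then have "x \<tau> \<sigma> \<noteq> 0" by (auto simp: op_adj_def)
  then show "\<sigma> \<in> Cf \<and> \<tau> \<in> Cf \<and> (\<forall>s. s \<notin> U \<longrightarrow> \<sigma> s = \<tau> s)"
    using loc_nz[OF assms(1)] by metis
next
  fix \<sigma> \<tau> \<sigma>' \<tau>'
  assume a: "\<sigma> \<in> Cf" "\<tau> \<in> Cf" "\<sigma>' \<in> Cf" "\<tau>' \<in> Cf"
       "\<forall>s\<in>U. \<sigma> s = \<sigma>' s \<and> \<tau> s = \<tau>' s" "\<forall>s. s \<notin> U \<longrightarrow> \<sigma> s = \<tau> s" "\<forall>s. s \<notin> U \<longrightarrow> \<sigma>' s = \<tau>' s"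
  have "x \<tau> \<sigma> = x \<tau>' \<sigma>'"
    by (rule loc_eq[OF assms(1) a(2,1,4,3)]) (use a(5-7) in auto)
  then show "op_adj x \<sigma> \<tau> = op_adj x \<sigma>' \<tau>'" by (simp add: op_adj_def)
qed

lemma loc_mult: assumes "loc U x" "loc U y" shows "loc U (op_mult x y)"
proof (rule loc_intro[OF loc_fin[OF assms(1)] loc_sub[OF assms(1)]])
  fix \<sigma> \<tau> assume nz: "op_mult x y \<sigma> \<tau> \<noteq> 0"
  then obtain \<rho> where r: "x \<sigma> \<rho> * y \<rho> \<tau> \<noteq> 0" unfolding MS[OF assms(1)]
    by (meson sum.neutral)
  then have "x \<sigma> \<rho> \<noteq> 0" "y \<rho> \<tau> \<noteq> 0" by auto
  from loc_nz[OF assms(1) this(1)] loc_nz[OF assms(2) this(2)]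
  show "\<sigma> \<in> Cf \<and> \<tau> \<in> Cf \<and> (\<forall>s. s \<notin> U \<longrightarrow> \<sigma> s = \<tau> s)" by metis
next
  fix \<sigma> \<tau> \<sigma>' \<tau>'
  assume a: "\<sigma> \<in> Cf" "\<tau> \<in> Cf" "\<sigma>' \<in> Cf" "\<tau>' \<in> Cf"
       "\<forall>s\<in>U. \<sigma> s = \<sigma>' s \<and> \<tau> s = \<tau>' s" "\<forall>s. s \<notin> U \<longrightarrow> \<sigma> s = \<tau> s" "\<forall>s. s \<notin> U \<longrightarrow> \<sigma>' s = \<tau>' s"
  have bij: "bij_betw (glue U \<sigma>') (Nb U \<sigma>) (Nb U \<sigma>')"
  proof (rule bij_betw_byWitness[where f' = "glue U \<sigma>"])
    show "\<forall>\<rho>\<in>Nb U \<sigma>. glue U \<sigma> (glue U \<sigma>' \<rho>) = \<rho>"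
      by (auto simp: Nb_def glue_def fun_eq_iff)
    show "\<forall>\<rho>\<in>Nb U \<sigma>'. glue U \<sigma>' (glue U \<sigma> \<rho>) = \<rho>"
      by (auto simp: Nb_def glue_def fun_eq_iff)
    show "glue U \<sigma>' ` Nb U \<sigma> \<subseteq> Nb U \<sigma>'"
      using a(3) by (auto simp: Nb_def glue_def glue_Conf[unfolded glue_def])
    show "glue U \<sigma> ` Nb U \<sigma>' \<subseteq> Nb U \<sigma>"
      using a(1) by (auto simp: Nb_def glue_def glue_Conf[unfolded glue_def])
  qed
  have "op_mult x y \<sigma>' \<tau>' = (\<Sum>\<rho>\<in>Nb U \<sigma>. x \<sigma>' (glue U \<sigma>' \<rho>) * y (glue U \<sigma>' \<rho>) \<tau>')"
    unfolding MS[OF assms(1)] using sum.reindex_bij_betw[OF bij, symmetric] by simp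
  also have "\<dots> = (\<Sum>\<rho>\<in>Nb U \<sigma>. x \<sigma> \<rho> * y \<rho> \<tau>)"
  proof (rule sum.cong[OF refl])
    fix \<rho> assume r: "\<rho> \<in> Nb U \<sigma>"
    then have rc: "\<rho> \<in> Cf" and ro: "\<forall>s. s \<notin> U \<longrightarrow> \<rho> s = \<sigma> s" by (auto simp: Nb_def)
    have gc: "glue U \<sigma>' \<rho> \<in> Cf" using glue_Conf[OF a(3) rc] .
    have "x \<sigma> \<rho> = x \<sigma>' (glue U \<sigma>' \<rho>)"
      by (rule loc_eq[OF assms(1) a(1) rc a(3) gc]) (use a ro in \<open>auto simp: glue_def\<close>)
    moreover have "y \<rho> \<tau> = y (glue U \<sigma>' \<rho>) \<tau>'"
      by (rule loc_eq[OF assms(2) rc a(2) gc a(4)]) (use a ro in \<open>auto simp: glue_def\<close>)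
    ultimately show "x \<sigma>' (glue U \<sigma>' \<rho>) * y (glue U \<sigma>' \<rho>) \<tau>' = x \<sigma> \<rho> * y \<rho> \<tau>" by simp
  qed
  also have "\<dots> = op_mult x y \<sigma> \<tau>" unfolding MS[OF assms(1)] ..
  finally show "op_mult x y \<sigma> \<tau> = op_mult x y \<sigma>' \<tau>'" by simp
qed

lemma Mat_iff: "x \<in> M \<longleftrightarrow> (\<exists>U. loc U x)"
  by (simp add: Mat_def)

lemma Mat_common: assumes "finite X" "X \<subseteq> M"
  shows "\<exists>U. finite U \<and> U \<subseteq> sites D \<and> (\<forall>x\<in>X. loc U x)"
  using assms
proof (induction X rule: finite_induct)
  case empty then show ?case by auto
next
  case (insert x X)
  then obtain U where U: "finite U" "U \<subseteq> sites D" "\<forall>x\<in>X. loc U x" by auto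
  obtain V where V: "loc V x" using insert(4) Mat_iff by auto
  have "finite (U \<union> V)" "U \<union> V \<subseteq> sites D" using U V loc_fin loc_sub by auto
  then show ?case using U V loc_mono by (metis Un_upper1 Un_upper2 insert_iff)
qed

lemma Mat_common2: "x \<in> M \<Longrightarrow> y \<in> M \<Longrightarrow> \<exists>U. loc U x \<and> loc U y"
  using Mat_common[of "{x,y}"] by auto

lemma Mat_common3: "x \<in> M \<Longrightarrow> y \<in> M \<Longrightarrow> z \<in> M \<Longrightarrow> \<exists>U. loc U x \<and> loc U y \<and> loc U z"
  using Mat_common[of "{x,y,z}"] by auto

lemma Mat_loc: "loc U x \<Longrightarrow> x \<in> M" by (auto simp: Mat_def)

lemma Mat_zero: "0 \<in> M" using loc_zero[of "{}"] Mat_loc by auto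
lemma Mat_one: "one \<in> M" using loc_one[of "{}"] Mat_loc by auto
lemma Mat_add: "x \<in> M \<Longrightarrow> y \<in> M \<Longrightarrow> x + y \<in> M"
  using Mat_common2 loc_add Mat_loc by metis
lemma Mat_diff: "x \<in> M \<Longrightarrow> y \<in> M \<Longrightarrow> x - y \<in> M"
  using Mat_common2 loc_diff Mat_loc by metis
lemma Mat_mult: "x \<in> M \<Longrightarrow> y \<in> M \<Longrightarrow> op_mult x y \<in> M"
  using Mat_common2 loc_mult Mat_loc by metis
lemma Mat_scale: "x \<in> M \<Longrightarrow> op_scale c x \<in> M"
  using loc_scale Mat_iff by metis
lemma Mat_adj: "x \<in> M \<Longrightarrow> op_adj x \<in> M"
  using loc_adj Mat_iff by metis
lemma Mat_sum: "(\<And>k. k \<in> K \<Longrightarrow> f k \<in> M) \<Longrightarrow> (\<Sum>k\<in>K. f k) \<in> M"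
  by (induction K rule: infinite_finite_induct) (auto intro: Mat_zero Mat_add)

end

context lat begin

lemma mult_zero_l[simp]: "op_mult 0 y = 0" by (simp add: op_mult_def fun_eq_iff)
lemma mult_zero_r[simp]: "op_mult x 0 = 0" by (simp add: op_mult_def fun_eq_iff)

lemma mult_assoc: assumes "loc U x" "loc U y"
  shows "op_mult (op_mult x y) z = op_mult x (op_mult y z)"
proof (intro ext)
  fix \<sigma> \<tau>
  have "op_mult (op_mult x y) z \<sigma> \<tau> = (\<Sum>\<rho>\<in>Nb U \<sigma>. (\<Sum>\<pi>\<in>Nb U \<sigma>. x \<sigma> \<pi> * y \<pi> \<rho>) * z \<rho> \<tau>)"
    unfolding MS[OF loc_mult[OF assms]] MS[OF assms(1)] ..
  also have "\<dots> = (\<Sum>\<rho>\<in>Nb U \<sigma>. \<Sum>\<pi>\<in>Nb U \<sigma>. x \<sigma> \<pi> * y \<pi> \<rho> * z \<rho> \<tau>)"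
    by (simp add: sum_distrib_right)
  also have "\<dots> = (\<Sum>\<pi>\<in>Nb U \<sigma>. \<Sum>\<rho>\<in>Nb U \<sigma>. x \<sigma> \<pi> * y \<pi> \<rho> * z \<rho> \<tau>)"
    by (rule sum.swap)
  also have "\<dots> = (\<Sum>\<pi>\<in>Nb U \<sigma>. x \<sigma> \<pi> * (\<Sum>\<rho>\<in>Nb U \<pi>. y \<pi> \<rho> * z \<rho> \<tau>))"
  proof (rule sum.cong[OF refl])
    fix \<pi> assume "\<pi> \<in> Nb U \<sigma>"
    then have "Nb U \<pi> = Nb U \<sigma>" by (rule Nb_mem_eq)
    then show "(\<Sum>\<rho>\<in>Nb U \<sigma>. x \<sigma> \<pi> * y \<pi> \<rho> * z \<rho> \<tau>) = x \<sigma> \<pi> * (\<Sum>\<rho>\<in>Nb U \<pi>. y \<pi> \<rho> * z \<rho> \<tau>)"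
      by (simp add: sum_distrib_left mult.assoc)
  qed
  also have "\<dots> = op_mult x (op_mult y z) \<sigma> \<tau>"
    unfolding MS[OF assms(1)] MS[OF assms(2)] ..
  finally show "op_mult (op_mult x y) z \<sigma> \<tau> = op_mult x (op_mult y z) \<sigma> \<tau>" .
qed

lemma mult_add_r: "loc U x \<Longrightarrow> op_mult x (y + z) = op_mult x y + op_mult x z"
  by (simp add: fun_eq_iff MS distrib_left sum.distrib)
lemma mult_add_l: "loc U z \<Longrightarrow> op_mult (x + y) z = op_mult x z + op_mult y z"
  by (simp add: fun_eq_iff MS' distrib_right sum.distrib)
lemma mult_diff_r: "loc U x \<Longrightarrow> op_mult x (y - z) = op_mult x y - op_mult x z"
  by (simp add: fun_eq_iff MS right_diff_distrib sum_subtractf)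
lemma mult_diff_l: "loc U z \<Longrightarrow> op_mult (x - y) z = op_mult x z - op_mult y z"
  by (simp add: fun_eq_iff MS' left_diff_distrib sum_subtractf)
lemma mult_scale_r: "loc U x \<Longrightarrow> op_mult x (op_scale c y) = op_scale c (op_mult x y)"
  by (simp add: fun_eq_iff MS op_scale_def sum_distrib_left mult.left_commute)
lemma mult_scale_l: "loc U y \<Longrightarrow> op_mult (op_scale c x) y = op_scale c (op_mult x y)"
  by (simp add: fun_eq_iff MS' op_scale_def sum_distrib_left mult.assoc)

lemma mult_sum_r: "loc U x \<Longrightarrow> op_mult x (\<Sum>k\<in>K. f k) = (\<Sum>k\<in>K. op_mult x (f k))"
  by (induction K rule: infinite_finite_induct) (auto simp: mult_add_r)
lemma mult_sum_l: "loc U z \<Longrightarrow> op_mult (\<Sum>k\<in>K. f k) z = (\<Sum>k\<in>K. op_mult (f k) z)"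
  by (induction K rule: infinite_finite_induct) (auto simp: mult_add_l)

lemma Nb_empty: "Nb {} \<sigma> = (if \<sigma> \<in> Cf then {\<sigma>} else {})"
proof -
  have "Nb {} \<sigma> = {\<rho> \<in> Cf. \<rho> = \<sigma>}" unfolding Nb_def by (auto simp: fun_eq_iff)
  then show ?thesis by auto
qed

lemma mult_one_l: assumes "loc U x" shows "op_mult one x = x"
proof (intro ext)
  fix \<sigma> \<tau>
  have l: "loc {} one" by (rule loc_one) auto
  show "op_mult one x \<sigma> \<tau> = x \<sigma> \<tau>"
    unfolding MS[OF l] Nb_empty using loc_nz0[OF assms, of \<sigma> \<tau>]
    by (auto simp: op_one_def)
qed

lemma mult_one_r: assumes "loc U x" shows "op_mult x one = x"
proof (intro ext)
  fix \<sigma> \<tau>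
  have l: "loc {} one" by (rule loc_one) auto
  show "op_mult x one \<sigma> \<tau> = x \<sigma> \<tau>"
    unfolding MS'[OF l] Nb_empty using loc_nz0[OF assms, of \<sigma> \<tau>]
    by (auto simp: op_one_def)
qed

lemma adj_mult: "op_adj (op_mult x y) = op_mult (op_adj y) (op_adj x)"
  by (simp add: op_adj_def op_mult_def fun_eq_iff mult.commute flip: infsum_cnj)
lemma adj_adj[simp]: "op_adj (op_adj x) = x" by (simp add: op_adj_def)
lemma adj_add: "op_adj (x + y) = op_adj x + op_adj y" by (simp add: op_adj_def fun_eq_iff)
lemma adj_diff: "op_adj (x - y) = op_adj x - op_adj y" by (simp add: op_adj_def fun_eq_iff)
lemma adj_scale: "op_adj (op_scale c x) = op_scale (cnj c) (op_adj x)" by (simp add: op_adj_def op_scale_def fun_eq_iff)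
lemma adj_zero[simp]: "op_adj 0 = 0" by (simp add: op_adj_def fun_eq_iff)
lemma adj_one[simp]: "op_adj one = one" unfolding op_adj_def op_one_def by (intro ext) auto
lemma adj_sum: "op_adj (\<Sum>k\<in>K. f k) = (\<Sum>k\<in>K. op_adj (f k))"
proof (induction K rule: infinite_finite_induct)
  case (insert x F)
  have "op_adj (\<Sum>k\<in>insert x F. f k) = op_adj (f x + (\<Sum>k\<in>F. f k))" by (simp only: sum.insert[OF insert(1,2)])
  also have "\<dots> = op_adj (f x) + (\<Sum>k\<in>F. op_adj (f k))" by (simp only: adj_add insert(3))
  finally show ?case by (simp only: sum.insert[OF insert(1,2)])
qed (simp_all add: op_adj_def)

lemma scale_one_mult: "op_scale c x = op_mult (op_scale c one) x" if "loc U x" for U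
  using mult_scale_l[OF loc_mult[OF loc_one[OF loc_fin[OF that] loc_sub[OF that]] that]] that
  by (metis loc_fin loc_one loc_sub mult_one_l mult_scale_l)

lemma massoc: "x \<in> M \<Longrightarrow> y \<in> M \<Longrightarrow> op_mult (op_mult x y) z = op_mult x (op_mult y z)"
  using Mat_common2 mult_assoc by metis
lemma madd_r: "x \<in> M \<Longrightarrow> op_mult x (y + z) = op_mult x y + op_mult x z"
  using Mat_iff mult_add_r by metis
lemma madd_l: "z \<in> M \<Longrightarrow> op_mult (x + y) z = op_mult x z + op_mult y z"
  using Mat_iff mult_add_l by metis
lemma mdiff_r: "x \<in> M \<Longrightarrow> op_mult x (y - z) = op_mult x y - op_mult x z"
  using Mat_iff mult_diff_r by metis
lemma mdiff_l: "z \<in> M \<Longrightarrow> op_mult (x - y) z = op_mult x z - op_mult y z"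
  using Mat_iff mult_diff_l by metis
lemma mscale_r: "x \<in> M \<Longrightarrow> op_mult x (op_scale c y) = op_scale c (op_mult x y)"
  using Mat_iff mult_scale_r by metis
lemma mscale_l: "y \<in> M \<Longrightarrow> op_mult (op_scale c x) y = op_scale c (op_mult x y)"
  using Mat_iff mult_scale_l by metis
lemma msum_r: "x \<in> M \<Longrightarrow> op_mult x (\<Sum>k\<in>K. f k) = (\<Sum>k\<in>K. op_mult x (f k))"
  using Mat_iff mult_sum_r by metis
lemma msum_l: "z \<in> M \<Longrightarrow> op_mult (\<Sum>k\<in>K. f k) z = (\<Sum>k\<in>K. op_mult (f k) z)"
  using Mat_iff mult_sum_l by metis
lemma mone_l: "x \<in> M \<Longrightarrow> op_mult one x = x"
  using Mat_iff mult_one_l by metis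
lemma mone_r: "x \<in> M \<Longrightarrow> op_mult x one = x"
  using Mat_iff mult_one_r by metis

lemma scale_scale: "op_scale a (op_scale b x) = op_scale (a * b) x"
  by (simp add: op_scale_def fun_eq_iff)
lemma scale_1[simp]: "op_scale 1 x = x"
  by (simp add: op_scale_def fun_eq_iff)
lemma scale_0[simp]: "op_scale 0 x = 0"
  by (simp add: op_scale_def fun_eq_iff)
lemma scale_add: "op_scale c (x + y) = op_scale c x + op_scale c y"
  by (simp add: op_scale_def fun_eq_iff distrib_left)
lemma scale_diff: "op_scale c (x - y) = op_scale c x - op_scale c y"
  by (simp add: op_scale_def fun_eq_iff right_diff_distrib)
lemma op_scale_zero: "op_scale c 0 = 0" by (simp add: op_scale_def fun_eq_iff)
lemma scale_sum: "op_scale c (\<Sum>k\<in>K. f k) = (\<Sum>k\<in>K. op_scale c (f k))"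
proof (induction K rule: infinite_finite_induct)
  case (insert x F)
  have "op_scale c (\<Sum>k\<in>insert x F. f k) = op_scale c (f x + (\<Sum>k\<in>F. f k))" by (simp only: sum.insert[OF insert(1,2)])
  also have "\<dots> = op_scale c (f x) + (\<Sum>k\<in>F. op_scale c (f k))" by (simp only: scale_add insert(3))
  finally show ?case by (simp only: sum.insert[OF insert(1,2)])
qed (simp_all add: op_scale_def)
lemma add_scale: "op_scale (a + b) x = op_scale a x + op_scale b x"
  by (simp add: op_scale_def fun_eq_iff distrib_right)

end

context lat begin

abbreviation "z0 \<equiv> (\<lambda>_::site. 0::nat)"
abbreviation "Cfg U \<equiv> Nb U z0"

definition EU :: "site set \<Rightarrow> conf \<Rightarrow> conf \<Rightarrow> op" where
  "EU U \<alpha> \<beta> = (\<lambda>\<sigma> \<tau>. if \<sigma> \<in> Cf \<and> \<tau> \<in> Cf \<and> (\<forall>s\<in>U. \<sigma> s = \<alpha> s \<and> \<tau> s = \<beta> s) \<and> (\<forall>s. s \<notin> U \<longrightarrow> \<sigma> s = \<tau> s) then 1 else 0)"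

lemma Cfg_Cf: "\<alpha> \<in> Cfg U \<Longrightarrow> \<alpha> \<in> Cf" by (simp add: Nb_def)

lemma loc_EU: assumes "finite U" "U \<subseteq> sites D" shows "loc U (EU U \<alpha> \<beta>)"
proof (rule loc_intro[OF assms])
  fix \<sigma> \<tau> assume "EU U \<alpha> \<beta> \<sigma> \<tau> \<noteq> 0"
  then show "\<sigma> \<in> Cf \<and> \<tau> \<in> Cf \<and> (\<forall>s. s \<notin> U \<longrightarrow> \<sigma> s = \<tau> s)"
    by (auto simp: EU_def split: if_splits)
next
  fix \<sigma> \<tau> \<sigma>' \<tau>'
  assume a: "\<sigma> \<in> Cf" "\<tau> \<in> Cf" "\<sigma>' \<in> Cf" "\<tau>' \<in> Cf"
       "\<forall>s\<in>U. \<sigma> s = \<sigma>' s \<and> \<tau> s = \<tau>' s" "\<forall>s. s \<notin> U \<longrightarrow> \<sigma> s = \<tau> s" "\<forall>s. s \<notin> U \<longrightarrow> \<sigma>' s = \<tau>' s"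
  then show "EU U \<alpha> \<beta> \<sigma> \<tau> = EU U \<alpha> \<beta> \<sigma>' \<tau>'"
    by (simp add: EU_def)
qed

lemma glue_Nb: "\<sigma> \<in> Cf \<Longrightarrow> \<alpha> \<in> Cf \<Longrightarrow> glue U \<sigma> \<alpha> \<in> Nb U \<sigma>"
  using glue_Conf by (auto simp: Nb_def glue_def)

lemma L1: assumes "finite U" "U \<subseteq> sites D" "\<alpha> \<in> Cf"
  shows "op_mult (EU U \<gamma> \<alpha>) w \<sigma> \<rho> = (if \<sigma> \<in> Cf \<and> (\<forall>s\<in>U. \<sigma> s = \<gamma> s) then w (glue U \<sigma> \<alpha>) \<rho> else 0)"
proof -
  have "op_mult (EU U \<gamma> \<alpha>) w \<sigma> \<rho> = (\<Sum>\<pi>\<in>Nb U \<sigma>. EU U \<gamma> \<alpha> \<sigma> \<pi> * w \<pi> \<rho>)"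
    by (rule MS[OF loc_EU[OF assms(1,2)]])
  also have "\<dots> = (\<Sum>\<pi>\<in>Nb U \<sigma>. if \<pi> = glue U \<sigma> \<alpha> then (if \<sigma> \<in> Cf \<and> (\<forall>s\<in>U. \<sigma> s = \<gamma> s) then w \<pi> \<rho> else 0) else 0)"
  proof (rule sum.cong[OF refl])
    fix \<pi> assume "\<pi> \<in> Nb U \<sigma>"
    then have p: "\<pi> \<in> Cf" "\<forall>s. s \<notin> U \<longrightarrow> \<pi> s = \<sigma> s" by (auto simp: Nb_def)
    have "(\<forall>s\<in>U. \<pi> s = \<alpha> s) = (\<pi> = glue U \<sigma> \<alpha>)"
      using p(2) by (auto simp: glue_def fun_eq_iff)
    then show "EU U \<gamma> \<alpha> \<sigma> \<pi> * w \<pi> \<rho> = (if \<pi> = glue U \<sigma> \<alpha> then (if \<sigma> \<in> Cf \<and> (\<forall>s\<in>U. \<sigma> s = \<gamma> s) then w \<pi> \<rho> else 0) else 0)"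
      using p by (auto simp: EU_def)
  qed
  also have "\<dots> = (if \<sigma> \<in> Cf \<and> (\<forall>s\<in>U. \<sigma> s = \<gamma> s) then w (glue U \<sigma> \<alpha>) \<rho> else 0)"
    using glue_Nb[of \<sigma> \<alpha> U] assms(3) Nb_finite[OF assms(1)] by (auto simp: sum.delta')
  finally show ?thesis .
qed

lemma L2: assumes "finite U" "U \<subseteq> sites D" "\<beta> \<in> Cf"
  shows "op_mult x (EU U \<beta> \<delta>) \<rho> \<tau> = (if \<tau> \<in> Cf \<and> (\<forall>s\<in>U. \<tau> s = \<delta> s) then x \<rho> (glue U \<tau> \<beta>) else 0)"
proof -
  have "op_mult x (EU U \<beta> \<delta>) \<rho> \<tau> = (\<Sum>\<pi>\<in>Nb U \<tau>. x \<rho> \<pi> * EU U \<beta> \<delta> \<pi> \<tau>)"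
    by (rule MS'[OF loc_EU[OF assms(1,2)]])
  also have "\<dots> = (\<Sum>\<pi>\<in>Nb U \<tau>. if \<pi> = glue U \<tau> \<beta> then (if \<tau> \<in> Cf \<and> (\<forall>s\<in>U. \<tau> s = \<delta> s) then x \<rho> \<pi> else 0) else 0)"
  proof (rule sum.cong[OF refl])
    fix \<pi> assume "\<pi> \<in> Nb U \<tau>"
    then have p: "\<pi> \<in> Cf" "\<forall>s. s \<notin> U \<longrightarrow> \<pi> s = \<tau> s" by (auto simp: Nb_def)
    have "(\<forall>s\<in>U. \<pi> s = \<beta> s) = (\<pi> = glue U \<tau> \<beta>)"
      using p(2) by (auto simp: glue_def fun_eq_iff)
    then show "x \<rho> \<pi> * EU U \<beta> \<delta> \<pi> \<tau> = (if \<pi> = glue U \<tau> \<beta> then (if \<tau> \<in> Cf \<and> (\<forall>s\<in>U. \<tau> s = \<delta> s) then x \<rho> \<pi> else 0) else 0)"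
      using p by (auto simp: EU_def)
  qed
  also have "\<dots> = (if \<tau> \<in> Cf \<and> (\<forall>s\<in>U. \<tau> s = \<delta> s) then x \<rho> (glue U \<tau> \<beta>) else 0)"
    using glue_Nb[of \<tau> \<beta> U] assms(3) Nb_finite[OF assms(1)] by (auto simp: sum.delta')
  finally show ?thesis .
qed

lemma sandwich: assumes w: "loc U w" and c: "\<alpha> \<in> Cfg U" "\<beta> \<in> Cfg U"
  shows "op_mult (op_mult (EU U \<gamma> \<alpha>) w) (EU U \<beta> \<delta>) = op_scale (w \<alpha> \<beta>) (EU U \<gamma> \<delta>)"
proof (intro ext)
  fix \<sigma> \<tau>
  have U: "finite U" "U \<subseteq> sites D" using loc_fin[OF w] loc_sub[OF w] by auto
  have ac: "\<alpha> \<in> Cf" "\<beta> \<in> Cf" using c by (auto simp: Nb_def)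
  have "op_mult (op_mult (EU U \<gamma> \<alpha>) w) (EU U \<beta> \<delta>) \<sigma> \<tau> =
     (if \<tau> \<in> Cf \<and> (\<forall>s\<in>U. \<tau> s = \<delta> s) then (if \<sigma> \<in> Cf \<and> (\<forall>s\<in>U. \<sigma> s = \<gamma> s) then w (glue U \<sigma> \<alpha>) (glue U \<tau> \<beta>) else 0) else 0)"
    unfolding L2[OF U ac(2)] L1[OF U ac(1)] ..
  also have "\<dots> = op_scale (w \<alpha> \<beta>) (EU U \<gamma> \<delta>) \<sigma> \<tau>"
  proof (cases "\<sigma> \<in> Cf \<and> \<tau> \<in> Cf")
    case True
    then have gc: "glue U \<sigma> \<alpha> \<in> Cf" "glue U \<tau> \<beta> \<in> Cf" using glue_Conf ac by auto
    show ?thesis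
    proof (cases "\<forall>s. s \<notin> U \<longrightarrow> \<sigma> s = \<tau> s")
      case True
      have "w (glue U \<sigma> \<alpha>) (glue U \<tau> \<beta>) = w \<alpha> \<beta>"
        by (rule loc_eq[OF w gc ac]) (use True c in \<open>auto simp: glue_def Nb_def\<close>)
      then show ?thesis using True \<open>\<sigma> \<in> Cf \<and> \<tau> \<in> Cf\<close> by (auto simp: EU_def op_scale_def)
    next
      case False
      then obtain s where "s \<notin> U" "\<sigma> s \<noteq> \<tau> s" by blast
      then have "w (glue U \<sigma> \<alpha>) (glue U \<tau> \<beta>) = 0"
        using loc_nz0[OF w] by (metis glue_def)
      then show ?thesis using False by (auto simp: EU_def op_scale_def)
    qed
  next
    case False
    then show ?thesis by (auto simp: EU_def op_scale_def)
  qed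
  finally show "op_mult (op_mult (EU U \<gamma> \<alpha>) w) (EU U \<beta> \<delta>) \<sigma> \<tau> = op_scale (w \<alpha> \<beta>) (EU U \<gamma> \<delta>) \<sigma> \<tau>" .
qed

definition restr :: "site set \<Rightarrow> conf \<Rightarrow> conf" where
  "restr U \<sigma> = glue U z0 \<sigma>"

lemma restr_Cfg: "\<sigma> \<in> Cf \<Longrightarrow> restr U \<sigma> \<in> Cfg U"
  unfolding restr_def using glue_Nb zero_Conf by blast

lemma Cfg_eq_restr: "\<gamma> \<in> Cfg U \<Longrightarrow> (\<forall>s\<in>U. \<sigma> s = \<gamma> s) = (\<gamma> = restr U \<sigma>)"
  by (auto simp: restr_def glue_def Nb_def fun_eq_iff)

lemma diag_sum: assumes "finite U" "U \<subseteq> sites D"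
  shows "(\<Sum>\<gamma>\<in>Cfg U. EU U \<gamma> \<gamma>) = one"
proof (intro ext)
  fix \<sigma> \<tau>
  have "(\<Sum>\<gamma>\<in>Cfg U. EU U \<gamma> \<gamma>) \<sigma> \<tau> = (\<Sum>\<gamma>\<in>Cfg U. EU U \<gamma> \<gamma> \<sigma> \<tau>)" by (rule sum_apply2)
  also have "\<dots> = (\<Sum>\<gamma>\<in>Cfg U. if \<gamma> = restr U \<sigma> then one \<sigma> \<tau> else 0)"
  proof (rule sum.cong[OF refl])
    fix \<gamma> assume g: "\<gamma> \<in> Cfg U"
    show "EU U \<gamma> \<gamma> \<sigma> \<tau> = (if \<gamma> = restr U \<sigma> then one \<sigma> \<tau> else 0)"
    proof (cases "\<sigma> = \<tau>")
      case True
      then show ?thesis using Cfg_eq_restr[OF g, of \<sigma>] by (auto simp: EU_def op_one_def)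
    next
      case False
      have "EU U \<gamma> \<gamma> \<sigma> \<tau> = 0"
      proof (rule ccontr)
        assume "EU U \<gamma> \<gamma> \<sigma> \<tau> \<noteq> 0"
        then have "\<forall>s\<in>U. \<sigma> s = \<gamma> s \<and> \<tau> s = \<gamma> s" "\<forall>s. s \<notin> U \<longrightarrow> \<sigma> s = \<tau> s"
          by (auto simp: EU_def split: if_splits)
        then have "\<sigma> = \<tau>" by (metis ext)
        then show False using False by simp
      qed
      then show ?thesis using False by (simp add: op_one_def)
    qed
  qed
  also have "\<dots> = one \<sigma> \<tau>"
  proof (cases "\<sigma> \<in> Cf")
    case True
    then show ?thesis using restr_Cfg[OF True, of U] Nb_finite[OF assms(1)] by (simp add: sum.delta')
  next
    case False
    then have o: "one \<sigma> \<tau> = 0" by (simp add: op_one_def)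
    show ?thesis unfolding o if_cancel by simp
  qed
  finally show "(\<Sum>\<gamma>\<in>Cfg U. EU U \<gamma> \<gamma>) \<sigma> \<tau> = one \<sigma> \<tau>" .
qed

lemma expansion: assumes w: "loc U w"
  shows "w = (\<Sum>\<alpha>\<in>Cfg U. \<Sum>\<beta>\<in>Cfg U. op_scale (w \<alpha> \<beta>) (EU U \<alpha> \<beta>))"
proof (intro ext)
  fix \<sigma> \<tau>
  have U: "finite U" using loc_fin[OF w] .
  have "(\<Sum>\<alpha>\<in>Cfg U. \<Sum>\<beta>\<in>Cfg U. op_scale (w \<alpha> \<beta>) (EU U \<alpha> \<beta>)) \<sigma> \<tau>
     = (\<Sum>\<alpha>\<in>Cfg U. \<Sum>\<beta>\<in>Cfg U. w \<alpha> \<beta> * EU U \<alpha> \<beta> \<sigma> \<tau>)"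
    by (simp add: sum_apply2 op_scale_def)
  also have "\<dots> = w \<sigma> \<tau>"
  proof (cases "\<sigma> \<in> Cf \<and> \<tau> \<in> Cf \<and> (\<forall>s. s \<notin> U \<longrightarrow> \<sigma> s = \<tau> s)")
    case True
    then have T: "\<sigma> \<in> Cf" "\<tau> \<in> Cf" "\<forall>s. s \<notin> U \<longrightarrow> \<sigma> s = \<tau> s" by auto
    have "(\<Sum>\<alpha>\<in>Cfg U. \<Sum>\<beta>\<in>Cfg U. w \<alpha> \<beta> * EU U \<alpha> \<beta> \<sigma> \<tau>)
       = (\<Sum>\<alpha>\<in>Cfg U. if \<alpha> = restr U \<sigma> then (\<Sum>\<beta>\<in>Cfg U. if \<beta> = restr U \<tau> then w \<alpha> \<beta> else 0) else 0)"
    proof (rule sum.cong[OF refl])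
      fix \<alpha> assume a: "\<alpha> \<in> Cfg U"
      have "(\<Sum>\<beta>\<in>Cfg U. w \<alpha> \<beta> * EU U \<alpha> \<beta> \<sigma> \<tau>) = (\<Sum>\<beta>\<in>Cfg U. if \<alpha> = restr U \<sigma> then (if \<beta> = restr U \<tau> then w \<alpha> \<beta> else 0) else 0)"
      proof (rule sum.cong[OF refl])
        fix \<beta> assume b: "\<beta> \<in> Cfg U"
        have "EU U \<alpha> \<beta> \<sigma> \<tau> = (if (\<forall>s\<in>U. \<sigma> s = \<alpha> s) \<and> (\<forall>s\<in>U. \<tau> s = \<beta> s) then 1 else 0)"
          using T by (auto simp: EU_def)
        also have "\<dots> = (if \<alpha> = restr U \<sigma> \<and> \<beta> = restr U \<tau> then 1 else 0)"
          using Cfg_eq_restr[OF a, of \<sigma>] Cfg_eq_restr[OF b, of \<tau>] by simp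
        finally show "w \<alpha> \<beta> * EU U \<alpha> \<beta> \<sigma> \<tau> = (if \<alpha> = restr U \<sigma> then (if \<beta> = restr U \<tau> then w \<alpha> \<beta> else 0) else 0)"
          by simp
      qed
      also have "\<dots> = (if \<alpha> = restr U \<sigma> then (\<Sum>\<beta>\<in>Cfg U. if \<beta> = restr U \<tau> then w \<alpha> \<beta> else 0) else 0)"
        by simp
      finally show "(\<Sum>\<beta>\<in>Cfg U. w \<alpha> \<beta> * EU U \<alpha> \<beta> \<sigma> \<tau>) = (if \<alpha> = restr U \<sigma> then (\<Sum>\<beta>\<in>Cfg U. if \<beta> = restr U \<tau> then w \<alpha> \<beta> else 0) else 0)" .
    qed
    also have "\<dots> = w (restr U \<sigma>) (restr U \<tau>)"
      using restr_Cfg[OF T(1), of U] restr_Cfg[OF T(2), of U] Nb_finite[OF U] by (simp add: sum.delta')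
    also have "\<dots> = w \<sigma> \<tau>"
      by (rule loc_eq[OF w]) (use T restr_Cfg[OF T(1), of U] restr_Cfg[OF T(2), of U] in \<open>auto simp: restr_def glue_def Nb_def\<close>)
    finally show ?thesis .
  next
    case False
    then have "w \<sigma> \<tau> = 0" using loc_nz0[OF w] by blast
    moreover have "EU U \<alpha> \<beta> \<sigma> \<tau> = 0" for \<alpha> \<beta> using False by (auto simp: EU_def)
    ultimately show ?thesis by simp
  qed
  finally show "w \<sigma> \<tau> = (\<Sum>\<alpha>\<in>Cfg U. \<Sum>\<beta>\<in>Cfg U. op_scale (w \<alpha> \<beta>) (EU U \<alpha> \<beta>)) \<sigma> \<tau>" by simp
qed

lemma EU_empty: "EU {} \<alpha> \<beta> = one"
proof (intro ext)
  fix \<sigma> \<tau> :: conf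
  show "EU {} \<alpha> \<beta> \<sigma> \<tau> = one \<sigma> \<tau>"
  proof (cases "\<sigma> = \<tau>")
    case True then show ?thesis by (simp add: EU_def op_one_def)
  next
    case False
    then obtain s where "\<sigma> s \<noteq> \<tau> s" by auto
    then show ?thesis using False unfolding EU_def op_one_def by auto
  qed
qed

lemma EU_insert: assumes "finite U" "U \<subseteq> sites D" "s \<in> sites D" "s \<notin> U" "\<beta> \<in> Cf"
  shows "EU (insert s U) \<alpha> \<beta> = op_mult (EU {s} \<alpha> \<beta>) (EU U \<alpha> \<beta>)"
proof (intro ext)
  fix \<sigma> \<tau>
  have gl: "glue {s} \<sigma> \<beta> = \<sigma>(s := \<beta> s)" by (auto simp: glue_def)
  have "op_mult (EU {s} \<alpha> \<beta>) (EU U \<alpha> \<beta>) \<sigma> \<tau> = (if \<sigma> \<in> Cf \<and> \<sigma> s = \<alpha> s then EU U \<alpha> \<beta> (\<sigma>(s := \<beta> s)) \<tau> else 0)"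
    using L1[of "{s}" \<beta> \<alpha> "EU U \<alpha> \<beta>" \<sigma> \<tau>] assms(3,5) gl by simp
  also have "\<dots> = EU (insert s U) \<alpha> \<beta> \<sigma> \<tau>"
  proof (cases "\<sigma> \<in> Cf")
    case True
    then have "\<sigma>(s := \<beta> s) \<in> Cf" using glue_Conf[OF True assms(5), of "{s}"] gl by simp
    then show ?thesis using True assms(4) by (auto simp: EU_def)
  next
    case False then show ?thesis by (simp add: EU_def)
  qed
  finally show "EU (insert s U) \<alpha> \<beta> \<sigma> \<tau> = op_mult (EU {s} \<alpha> \<beta>) (EU U \<alpha> \<beta>) \<sigma> \<tau>" by simp
qed

end

context lat begin

lemma Mat_EU: "s \<in> sites D \<Longrightarrow> EU {s} \<alpha> \<beta> \<in> M"
  using loc_EU[of "{s}"] Mat_loc by auto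

lemma central_Mat: assumes z: "z \<in> M" and comm: "\<forall>x\<in>M. op_mult x z = op_mult z x"
  shows "z = op_scale (z z0 z0) one"
proof -
  obtain U where zU: "loc U z" using z[unfolded Mat_iff] by blast
  have Ec: "(if \<sigma> \<in> Cf \<and> \<sigma> s = \<alpha> s then z (glue {s} \<sigma> \<beta>) \<tau> else 0) =
            (if \<tau> \<in> Cf \<and> \<tau> s = \<beta> s then z \<sigma> (glue {s} \<tau> \<alpha>) else 0)"
    if s: "s \<in> sites D" and ab: "\<alpha> \<in> Cf" "\<beta> \<in> Cf" for s \<alpha> \<beta> \<sigma> \<tau>
  proof -
    have fs: "finite {s}" "{s} \<subseteq> sites D" using s by auto
    have "EU {s} \<alpha> \<beta> \<in> M" by (rule Mat_EU[OF s])
    then have "op_mult (EU {s} \<alpha> \<beta>) z = op_mult z (EU {s} \<alpha> \<beta>)" using comm by blast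
    then have e: "op_mult (EU {s} \<alpha> \<beta>) z \<sigma> \<tau> = op_mult z (EU {s} \<alpha> \<beta>) \<sigma> \<tau>" by simp
    have l1: "op_mult (EU {s} \<alpha> \<beta>) z \<sigma> \<tau> = (if \<sigma> \<in> Cf \<and> (\<forall>t\<in>{s}. \<sigma> t = \<alpha> t) then z (glue {s} \<sigma> \<beta>) \<tau> else 0)"
      by (rule L1[OF fs ab(2)])
    have l2: "op_mult z (EU {s} \<alpha> \<beta>) \<sigma> \<tau> = (if \<tau> \<in> Cf \<and> (\<forall>t\<in>{s}. \<tau> t = \<beta> t) then z \<sigma> (glue {s} \<tau> \<alpha>) else 0)"
      by (rule L2[OF fs ab(1)])
    have b1: "(\<forall>t\<in>{s}. \<sigma> t = \<alpha> t) = (\<sigma> s = \<alpha> s)" "(\<forall>t\<in>{s}. \<tau> t = \<beta> t) = (\<tau> s = \<beta> s)" by auto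
    show ?thesis using e l1 l2 unfolding b1 by simp
  qed
  have off: "\<sigma> = \<tau>" if nz: "z \<sigma> \<tau> \<noteq> 0" for \<sigma> \<tau>
  proof (rule ccontr)
    assume ne: "\<sigma> \<noteq> \<tau>"
    from loc_nz[OF zU nz] have c: "\<sigma> \<in> Cf" "\<tau> \<in> Cf" by auto
    from ne obtain s where s: "\<sigma> s \<noteq> \<tau> s" by auto
    have sD: "s \<in> sites D"
    proof (rule ccontr)
      assume "s \<notin> sites D"
      then have "\<sigma> s = 0" "\<tau> s = 0" using Conf_off c by auto
      then show False using s by simp
    qed
    have g: "glue {s} \<sigma> \<sigma> = \<sigma>" by (auto simp: glue_def)
    have "z \<sigma> \<tau> = 0" using Ec[OF sD c(1) c(1), of \<sigma> \<tau>] s c g by simp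
    then show False using nz by simp
  qed
  have step: "z (\<sigma>(s := j)) (\<sigma>(s := j)) = z \<sigma> \<sigma>" if c: "\<sigma> \<in> Cf" and sD: "s \<in> sites D" and j: "j < p s" for \<sigma> s j
  proof -
    have bc: "\<sigma>(s := j) \<in> Cf" using c j sD by (auto simp: Conf_def)
    have g1: "glue {s} \<sigma> (\<sigma>(s := j)) = \<sigma>(s := j)" by (auto simp: glue_def)
    have g2: "glue {s} (\<sigma>(s := j)) \<sigma> = \<sigma>" by (auto simp: glue_def)
    show ?thesis using Ec[OF sD c bc, of \<sigma> "\<sigma>(s := j)"] c bc g1 g2 by simp
  qed
  have ind: "finite F \<Longrightarrow> \<forall>\<sigma>\<in>Cf. (\<forall>s. s \<notin> F \<longrightarrow> \<sigma> s = 0) \<longrightarrow> z \<sigma> \<sigma> = z z0 z0" for F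
  proof (induction F rule: finite_induct)
    case empty
    show ?case
    proof (intro ballI impI)
      fix \<sigma> :: conf assume "\<forall>s. s \<notin> {} \<longrightarrow> \<sigma> s = 0"
      then have "\<sigma> = z0" by (intro ext) simp
      then show "z \<sigma> \<sigma> = z z0 z0" by simp
    qed
  next
    case (insert s F)
    show ?case
    proof (intro ballI impI)
      fix \<sigma> assume c: "\<sigma> \<in> Cf" and o: "\<forall>t. t \<notin> insert s F \<longrightarrow> \<sigma> t = 0"
      have c0: "\<sigma>(s := 0) \<in> Cf" using c pos by (auto simp: Conf_def)
      have o0: "\<forall>t. t \<notin> F \<longrightarrow> (\<sigma>(s := 0)) t = 0" using o by auto
      have "z (\<sigma>(s := 0)) (\<sigma>(s := 0)) = z z0 z0" using insert(3) c0 o0 by simp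
      moreover have "z \<sigma> \<sigma> = z (\<sigma>(s := 0)) (\<sigma>(s := 0))"
      proof (cases "s \<in> sites D")
        case True
        have "\<sigma> s < p s" using c True by (simp add: Conf_def)
        then have "z ((\<sigma>(s := 0))(s := \<sigma> s)) ((\<sigma>(s := 0))(s := \<sigma> s)) = z (\<sigma>(s := 0)) (\<sigma>(s := 0))"
          by (rule step[OF c0 True])
        moreover have "(\<sigma>(s := 0))(s := \<sigma> s) = \<sigma>" by simp
        ultimately show ?thesis by simp
      next
        case False
        then have "\<sigma> s = 0" using c Conf_off by blast
        then have "\<sigma>(s := 0) = \<sigma>" by auto
        then show ?thesis by simp
      qed
      ultimately show "z \<sigma> \<sigma> = z z0 z0" by simp
    qed
  qed
  have diag: "z \<sigma> \<sigma> = z z0 z0" if c: "\<sigma> \<in> Cf" for \<sigma>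
  proof -
    have rc: "restr U \<sigma> \<in> Cf" using restr_Cfg[OF c] by (simp add: Nb_def)
    have e1: "z \<sigma> \<sigma> = z (restr U \<sigma>) (restr U \<sigma>)"
      by (rule loc_eq[OF zU c c rc rc]) (auto simp: restr_def glue_def)
    have "\<forall>s. s \<notin> U \<longrightarrow> restr U \<sigma> s = 0" by (simp add: restr_def glue_def)
    then have e2: "z (restr U \<sigma>) (restr U \<sigma>) = z z0 z0" using ind[OF loc_fin[OF zU]] rc by blast
    show ?thesis using e1 e2 by simp
  qed
  show ?thesis
  proof (intro ext)
    fix \<sigma> \<tau>
    show "z \<sigma> \<tau> = op_scale (z z0 z0) one \<sigma> \<tau>"
    proof (cases "\<sigma> = \<tau> \<and> \<sigma> \<in> Cf")
      case True
      then have "z \<sigma> \<tau> = z z0 z0" using diag[of \<sigma>] by blast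
      moreover have "one \<sigma> \<tau> = 1"
      proof -
        from True have e: "\<sigma> = \<tau>" and c: "\<sigma> \<in> Cf" by auto
        show ?thesis unfolding op_one_def using e c by simp
      qed
      ultimately show ?thesis by (simp add: op_scale_def)
    next
      case False
      then have "z \<sigma> \<tau> = 0" using off loc_nz[OF zU] by blast
      then show ?thesis using False by (auto simp: op_scale_def op_one_def)
    qed
  qed
qed

lemma unit_lemma: assumes w: "w \<in> M" "w \<noteq> 0"
  shows "\<exists>U \<alpha>0 \<beta>0 c. finite U \<and> U \<subseteq> sites D \<and> \<alpha>0 \<in> Cfg U \<and> \<beta>0 \<in> Cfg U \<and> c \<noteq> 0 \<and>
     (\<Sum>\<gamma>\<in>Cfg U. op_mult (op_mult (EU U \<gamma> \<alpha>0) w) (EU U \<beta>0 \<gamma>)) = op_scale c one"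
proof -
  obtain U where wU: "loc U w" using w(1)[unfolded Mat_iff] by blast
  have U: "finite U" "U \<subseteq> sites D" using loc_fin[OF wU] loc_sub[OF wU] by auto
  have "\<exists>\<sigma> \<tau>. w \<sigma> \<tau> \<noteq> 0"
  proof (rule ccontr)
    assume "\<not> (\<exists>\<sigma> \<tau>. w \<sigma> \<tau> \<noteq> 0)"
    then have "w = 0" by (intro ext) simp
    then show False using w(2) by simp
  qed
  then obtain \<sigma> \<tau> where nz: "w \<sigma> \<tau> \<noteq> 0" by blast
  from loc_nz[OF wU nz] have c: "\<sigma> \<in> Cf" "\<tau> \<in> Cf" "\<forall>s. s \<notin> U \<longrightarrow> \<sigma> s = \<tau> s" by auto
  let ?a = "restr U \<sigma>" and ?b = "restr U \<tau>"
  have ab: "?a \<in> Cfg U" "?b \<in> Cfg U" using restr_Cfg c by auto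
  have "w ?a ?b = w \<sigma> \<tau>"
    by (rule loc_eq[OF wU]) (use ab c in \<open>auto simp: Nb_def restr_def glue_def\<close>)
  then have nz': "w ?a ?b \<noteq> 0" using nz by simp
  have "(\<Sum>\<gamma>\<in>Cfg U. op_mult (op_mult (EU U \<gamma> ?a) w) (EU U ?b \<gamma>)) = (\<Sum>\<gamma>\<in>Cfg U. op_scale (w ?a ?b) (EU U \<gamma> \<gamma>))"
    using sandwich[OF wU ab] by simp
  also have "\<dots> = op_scale (w ?a ?b) (\<Sum>\<gamma>\<in>Cfg U. EU U \<gamma> \<gamma>)" by (simp add: scale_sum)
  also have "\<dots> = op_scale (w ?a ?b) one" using diag_sum[OF U] by simp
  finally show ?thesis using U ab nz' by blast
qed

lemma mult_adj_diag: assumes "loc U y"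
  shows "op_mult y (op_adj y) \<sigma> \<sigma> = of_real (\<Sum>\<rho>\<in>Nb U \<sigma>. (cmod (y \<sigma> \<rho>))^2)"
proof -
  have "op_mult y (op_adj y) \<sigma> \<sigma> = (\<Sum>\<rho>\<in>Nb U \<sigma>. y \<sigma> \<rho> * cnj (y \<sigma> \<rho>))"
    unfolding MS[OF assms] op_adj_def ..
  also have "\<dots> = (\<Sum>\<rho>\<in>Nb U \<sigma>. of_real ((cmod (y \<sigma> \<rho>))^2))"
    by (simp only: complex_norm_square)
  finally show ?thesis by (simp only: of_real_sum)
qed

lemma faithful: assumes fin: "finite K" and y: "\<And>k. k \<in> K \<Longrightarrow> y k \<in> M"
  and z: "(\<Sum>k\<in>K. op_mult (y k) (op_adj (y k))) = 0"
  shows "\<forall>k\<in>K. y k = 0"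
proof -
  obtain U where U: "finite U" "U \<subseteq> sites D" "\<forall>x\<in>y ` K. loc U x"
    using Mat_common[of "y ` K"] fin y by auto
  have yU: "k \<in> K \<Longrightarrow> loc U (y k)" for k using U(3) by auto
  show ?thesis
  proof (intro ballI ext)
    fix k \<sigma> \<rho> assume k: "k \<in> K"
    have "0 = (\<Sum>k\<in>K. op_mult (y k) (op_adj (y k))) \<sigma> \<sigma>" using z by simp
    also have "\<dots> = (\<Sum>k\<in>K. op_mult (y k) (op_adj (y k)) \<sigma> \<sigma>)" by (rule sum_apply2)
    also have "\<dots> = of_real (\<Sum>k\<in>K. \<Sum>\<rho>\<in>Nb U \<sigma>. (cmod (y k \<sigma> \<rho>))^2)"
      using mult_adj_diag[OF yU] by simp
    finally have s0': "0 = complex_of_real (\<Sum>k\<in>K. \<Sum>\<rho>\<in>Nb U \<sigma>. (cmod (y k \<sigma> \<rho>))^2)" .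
    then have s0: "(\<Sum>k\<in>K. \<Sum>\<rho>\<in>Nb U \<sigma>. (cmod (y k \<sigma> \<rho>))^2) = 0"
      using of_real_eq_0_iff[THEN iffD1, OF s0'[symmetric]] by blast
    have "(\<Sum>\<rho>\<in>Nb U \<sigma>. (cmod (y k \<sigma> \<rho>))^2) = 0"
      using s0 sum_nonneg_eq_0_iff[of K "\<lambda>k. \<Sum>\<rho>\<in>Nb U \<sigma>. (cmod (y k \<sigma> \<rho>))^2"] fin k
      by (simp add: sum_nonneg)
    then have all0: "\<forall>\<rho>\<in>Nb U \<sigma>. (cmod (y k \<sigma> \<rho>))^2 = 0"
      using sum_nonneg_eq_0_iff[of "Nb U \<sigma>" "\<lambda>\<rho>. (cmod (y k \<sigma> \<rho>))^2"] Nb_finite[OF U(1)] by simp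
    have "y k \<sigma> \<rho> = 0"
    proof (cases "\<rho> \<in> Nb U \<sigma>")
      case True then show ?thesis using all0 by simp
    next
      case False
      then have "\<not> (\<sigma> \<in> Cf \<and> \<rho> \<in> Cf \<and> (\<forall>s. s \<notin> U \<longrightarrow> \<sigma> s = \<rho> s))" by (auto simp: Nb_def)
      then show ?thesis using loc_nz0[OF yU[OF k]] by blast
    qed
    then show "y k \<sigma> \<rho> = (0::op) \<sigma> \<rho>" by simp
  qed
qed

end

lemma fin_dep:
  fixes f :: "'j \<Rightarrow> 'x \<Rightarrow> complex"
  assumes "finite X" "finite J" "card X < card J"
  shows "\<exists>c. (\<exists>j\<in>J. c j \<noteq> 0) \<and> (\<forall>x\<in>X. (\<Sum>j\<in>J. c j * f j x) = 0)"
  using assms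
proof (induction X arbitrary: J f rule: finite_induct)
  case empty
  then have "J \<noteq> {}" by auto
  then obtain j0 where "j0 \<in> J" by auto
  then show ?case by (intro exI[of _ "\<lambda>j. if j = j0 then 1 else 0"]) auto
next
  case (insert x0 X)
  have cX: "card (insert x0 X) = Suc (card X)" using insert(1,2) by simp
  show ?case
  proof (cases "\<forall>j\<in>J. f j x0 = 0")
    case True
    have "card X < card J" using insert(5) cX by simp
    from insert(3)[OF insert(4) this, of f] obtain c where
      c: "\<exists>j\<in>J. c j \<noteq> 0" "\<forall>x\<in>X. (\<Sum>j\<in>J. c j * f j x) = 0" by blast
    have "(\<Sum>j\<in>J. c j * f j x0) = 0" using True by simp
    then show ?thesis using c by blast
  next
    case False
    then obtain j0 where j0: "j0 \<in> J" "f j0 x0 \<noteq> 0" by blast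
    define J' where "J' = J - {j0}"
    define g where "g j x = f j x - (f j x0 / f j0 x0) * f j0 x" for j x
    have fJ': "finite J'" using insert(4) by (simp add: J'_def)
    have cJ': "card J' = card J - 1" using j0(1) insert(4) by (simp add: J'_def)
    have "card X < card J'" using cJ' insert(5) cX by simp
    from insert(3)[OF fJ' this, of g] obtain c' where
      c': "\<exists>j\<in>J'. c' j \<noteq> 0" "\<forall>x\<in>X. (\<Sum>j\<in>J'. c' j * g j x) = 0" by blast
    define c where "c j = (if j = j0 then - (\<Sum>j\<in>J'. c' j * f j x0) / f j0 x0 else c' j)" for j
    have key: "(\<Sum>j\<in>J. c j * f j x) = (\<Sum>j\<in>J'. c' j * g j x)" for x
    proof -
      have "(\<Sum>j\<in>J. c j * f j x) = c j0 * f j0 x + (\<Sum>j\<in>J'. c j * f j x)"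
        unfolding J'_def using sum.remove[OF insert(4) j0(1)] by simp
      also have "(\<Sum>j\<in>J'. c j * f j x) = (\<Sum>j\<in>J'. c' j * f j x)"
        by (rule sum.cong) (auto simp: c_def J'_def)
      also have "(\<Sum>j\<in>J'. c' j * g j x) = (\<Sum>j\<in>J'. c' j * f j x) - (\<Sum>j\<in>J'. c' j * f j x0) * (f j0 x / f j0 x0)"
      proof -
        have e: "c' j * g j x = c' j * f j x - (c' j * f j x0) * (f j0 x / f j0 x0)" for j
          by (simp add: g_def algebra_simps)
        show ?thesis unfolding e sum_subtractf sum_distrib_right ..
      qed
      moreover have "c j0 * f j0 x = - ((\<Sum>j\<in>J'. c' j * f j x0) * (f j0 x / f j0 x0))"
        by (simp add: c_def)
      ultimately show ?thesis by simp
    qed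
    have "\<exists>j\<in>J. c j \<noteq> 0"
    proof -
      obtain j where "j \<in> J'" "c' j \<noteq> 0" using c'(1) by blast
      then show ?thesis by (intro bexI[of _ j]) (auto simp: c_def J'_def)
    qed
    moreover have "\<forall>x\<in>insert x0 X. (\<Sum>j\<in>J. c j * f j x) = 0"
    proof
      fix x assume "x \<in> insert x0 X"
      then show "(\<Sum>j\<in>J. c j * f j x) = 0"
      proof
        assume "x = x0"
        have "g j x0 = 0" for j using j0(2) by (simp add: g_def)
        then show ?thesis unfolding key \<open>x = x0\<close> by simp
      next
        assume "x \<in> X" then show ?thesis unfolding key using c'(2) by blast
      qed
    qed
    ultimately show ?thesis by blast
  qed
qed

locale inv = lat +
  fixes A :: "op set"
  assumes invA: "invertible_subalg D p A"
begin

abbreviation "Ac \<equiv> commutant D p A"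

lemma usub: "unital_star_subalg D p A" using invA by (simp add: invertible_subalg_def)

lemma A_M: "a \<in> A \<Longrightarrow> a \<in> M" using usub by (auto simp: unital_star_subalg_def)
lemma A_one: "one \<in> A" using usub by (auto simp: unital_star_subalg_def)
lemma A_add: "a \<in> A \<Longrightarrow> b \<in> A \<Longrightarrow> a + b \<in> A" using usub by (auto simp: unital_star_subalg_def)
lemma A_mult: "a \<in> A \<Longrightarrow> b \<in> A \<Longrightarrow> op_mult a b \<in> A" using usub by (auto simp: unital_star_subalg_def)
lemma A_scale: "a \<in> A \<Longrightarrow> op_scale c a \<in> A" using usub by (auto simp: unital_star_subalg_def)
lemma A_adj: "a \<in> A \<Longrightarrow> op_adj a \<in> A" using usub by (auto simp: unital_star_subalg_def)
lemma A_zero: "0 \<in> A" using A_scale[OF A_one, of 0] by simp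
lemma A_diff: "a \<in> A \<Longrightarrow> b \<in> A \<Longrightarrow> a - b \<in> A"
proof -
  assume "a \<in> A" "b \<in> A"
  moreover have "a - b = a + op_scale (-1) b" by (simp add: op_scale_m1)
  ultimately show ?thesis using A_add A_scale by metis
qed
lemma A_sum: "(\<And>k. k \<in> K \<Longrightarrow> f k \<in> A) \<Longrightarrow> (\<Sum>k\<in>K. f k) \<in> A"
  by (induction K rule: infinite_finite_induct) (auto intro: A_zero A_add)

lemma Ac_M: "b \<in> Ac \<Longrightarrow> b \<in> M" by (simp add: commutant_def)
lemma Ac_comm: "a \<in> A \<Longrightarrow> b \<in> Ac \<Longrightarrow> op_mult a b = op_mult b a" by (simp add: commutant_def)
lemma Ac_mult: assumes "b \<in> Ac" "c \<in> Ac" shows "op_mult b c \<in> Ac"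
proof -
  have bM: "b \<in> M" "c \<in> M" using assms Ac_M by auto
  have "op_mult a (op_mult b c) = op_mult (op_mult b c) a" if a: "a \<in> A" for a
  proof -
    have aM: "a \<in> M" using A_M a .
    have "op_mult a (op_mult b c) = op_mult (op_mult a b) c" using massoc[OF aM bM(1)] by simp
    also have "\<dots> = op_mult (op_mult b a) c" using Ac_comm[OF a assms(1)] by simp
    also have "\<dots> = op_mult b (op_mult a c)" using massoc[OF bM(1) aM] by simp
    also have "\<dots> = op_mult b (op_mult c a)" using Ac_comm[OF a assms(2)] by simp
    also have "\<dots> = op_mult (op_mult b c) a" using massoc[OF bM] by simp
    finally show ?thesis .
  qed
  then show ?thesis using Mat_mult[OF bM] by (simp add: commutant_def)
qed
lemma Ac_one: "one \<in> Ac"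
  using Mat_one mone_l mone_r A_M by (auto simp: commutant_def)

lemma decomp: assumes "x \<in> M"
  shows "\<exists>(n::nat) a b. (\<forall>i<n. a i \<in> A \<and> b i \<in> Ac) \<and> x = (\<Sum>i<n. op_mult (a i) (b i))"
proof -
  from invA obtain l where l: "\<forall>x\<in>M. \<exists>(n::nat) a b. (\<forall>i<n. a i \<in> A \<and> b i \<in> Ac \<and>
               Supp D p (a i) \<subseteq> thicken D (Supp D p x) l \<and> Supp D p (b i) \<subseteq> thicken D (Supp D p x) l) \<and>
        x = (\<Sum>i<n. op_mult (a i) (b i))"
    unfolding invertible_subalg_def by blast
  from bspec[OF l assms] show ?thesis
  proof (elim exE conjE)
    fix n :: nat and a b :: "nat \<Rightarrow> op" assume h1: "\<forall>i<n. a i \<in> A \<and> b i \<in> Ac \<and>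
               Supp D p (a i) \<subseteq> thicken D (Supp D p x) l \<and> Supp D p (b i) \<subseteq> thicken D (Supp D p x) l"
      and h2: "x = (\<Sum>i<n. op_mult (a i) (b i))"
    have h3: "\<forall>i<n. a i \<in> A \<and> b i \<in> Ac" using h1 by blast
    show ?thesis using h2 h3 by blast
  qed
qed

lemma swap4: assumes "a \<in> A" "i \<in> A" "b \<in> Ac" "c \<in> Ac"
  shows "op_mult (op_mult a b) (op_mult i c) = op_mult (op_mult a i) (op_mult b c)"
proof -
  have M: "a \<in> M" "i \<in> M" "b \<in> M" "c \<in> M" using assms A_M Ac_M by auto
  have "op_mult (op_mult a b) (op_mult i c) = op_mult a (op_mult b (op_mult i c))" using massoc[OF M(1,3)] by simp
  also have "op_mult b (op_mult i c) = op_mult (op_mult b i) c" using massoc[OF M(3,2)] by simp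
  also have "\<dots> = op_mult (op_mult i b) c" using Ac_comm[OF assms(2,3)] by simp
  also have "\<dots> = op_mult i (op_mult b c)" using massoc[OF M(2,3)] by simp
  also have "op_mult a (op_mult i (op_mult b c)) = op_mult (op_mult a i) (op_mult b c)" using massoc[OF M(1,2)] by simp
  finally show ?thesis .
qed

lemma central: "central_subalg D p A"
  unfolding central_subalg_def
proof (intro ballI impI)
  fix z assume zA: "z \<in> A" and cz: "\<forall>y\<in>A. op_mult z y = op_mult y z"
  have zM: "z \<in> M" using A_M zA .
  have "\<forall>x\<in>M. op_mult x z = op_mult z x"
  proof
    fix x assume "x \<in> M"
    then obtain n :: nat and a b where ab: "\<forall>i<n. a i \<in> A \<and> b i \<in> Ac" and x: "x = (\<Sum>i<n. op_mult (a i) (b i))"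
      using decomp by blast
    have t: "op_mult (op_mult (a i) (b i)) z = op_mult z (op_mult (a i) (b i))" if i: "i < n" for i
    proof -
      have a: "a i \<in> A" "a i \<in> M" and b: "b i \<in> Ac" "b i \<in> M" using ab i A_M Ac_M by auto
      have "op_mult z (op_mult (a i) (b i)) = op_mult (op_mult z (a i)) (b i)" using massoc[OF zM a(2)] by simp
      also have "\<dots> = op_mult (op_mult (a i) z) (b i)" using cz a(1) by simp
      also have "\<dots> = op_mult (a i) (op_mult z (b i))" using massoc[OF a(2) zM] by simp
      also have "\<dots> = op_mult (a i) (op_mult (b i) z)" using Ac_comm[OF zA b(1)] by simp
      also have "\<dots> = op_mult (op_mult (a i) (b i)) z" using massoc[OF a(2) b(2)] by simp
      finally show ?thesis by simp
    qed
    show "op_mult x z = op_mult z x" unfolding x msum_l[OF zM] msum_r[OF zM]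
      using t by (intro sum.cong) auto
  qed
  from central_Mat[OF zM this] show "\<exists>c. z = op_scale c one" by blast
qed

end

fun opow :: "op \<Rightarrow> op \<Rightarrow> nat \<Rightarrow> op" where
  "opow u h 0 = u"
| "opow u h (Suc n) = op_mult h (opow u h n)"

context inv begin

definition sp :: "op set \<Rightarrow> op set" where
  "sp I = {x. \<exists>xs. set xs \<subseteq> I \<times> Ac \<and> x = sum_list (map (\<lambda>(i,b). op_mult i b) xs)}"

lemma sp_zero: "0 \<in> sp I"
  unfolding sp_def by (rule CollectI, rule exI[of _ "[]"]) simp

lemma sp_add: assumes "x \<in> sp I" "y \<in> sp I" shows "x + y \<in> sp I"
proof -
  obtain xs where xs: "set xs \<subseteq> I \<times> Ac" "x = sum_list (map (\<lambda>(i,b). op_mult i b) xs)"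
    using assms(1) unfolding sp_def by blast
  obtain ys where ys: "set ys \<subseteq> I \<times> Ac" "y = sum_list (map (\<lambda>(i,b). op_mult i b) ys)"
    using assms(2) unfolding sp_def by blast
  have "set (xs @ ys) \<subseteq> I \<times> Ac" "x + y = sum_list (map (\<lambda>(i,b). op_mult i b) (xs @ ys))"
    using xs ys by auto
  then show ?thesis unfolding sp_def by blast
qed

lemma sp_sum: "(\<And>k. k \<in> K \<Longrightarrow> f k \<in> sp I) \<Longrightarrow> (\<Sum>k\<in>K. f k) \<in> sp I"
proof (induction K rule: infinite_finite_induct)
  case (infinite K)
  have "(\<Sum>k\<in>K. f k) = 0" using infinite(1) by (rule sum.infinite)
  then show ?case using sp_zero by (simp only:)
next
  case empty show ?case unfolding sum.empty by (rule sp_zero)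
next
  case (insert x F)
  then have "f x + (\<Sum>k\<in>F. f k) \<in> sp I" using sp_add by simp
  then show ?case unfolding sum.insert[OF insert(1,2)] .
qed

lemma sp_base: assumes "i \<in> I" "b \<in> Ac" shows "op_mult i b \<in> sp I"
proof -
  have "set [(i,b)] \<subseteq> I \<times> Ac" "op_mult i b = sum_list (map (\<lambda>(i,b). op_mult i b) [(i,b)])"
    using assms by auto
  then show ?thesis unfolding sp_def by blast
qed

lemma sum_list_M: "(\<And>y. y \<in> set ys \<Longrightarrow> y \<in> M) \<Longrightarrow> sum_list ys \<in> M"
  by (induction ys) (auto intro: Mat_zero Mat_add)

lemma sp_M: assumes "I \<subseteq> A" "x \<in> sp I" shows "x \<in> M"
proof -
  obtain xs where xs: "set xs \<subseteq> I \<times> Ac" "x = sum_list (map (\<lambda>(i,b). op_mult i b) xs)"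
    using assms(2) unfolding sp_def by blast
  have "y \<in> M" if "y \<in> set (map (\<lambda>(i,b). op_mult i b) xs)" for y
  proof -
    from that obtain q where q: "q \<in> set xs" "y = (\<lambda>(i,b). op_mult i b) q" by auto
    obtain i c where "q = (i, c)" by fastforce
    then have "(i, c) \<in> set xs" "y = op_mult i c" using q by auto
    then have "i \<in> A" "c \<in> Ac" using xs(1) assms(1) by auto
    then show ?thesis using \<open>y = op_mult i c\<close> A_M Ac_M Mat_mult by blast
  qed
  then have "sum_list (map (\<lambda>(i,b). op_mult i b) xs) \<in> M" by (rule sum_list_M)
  then show ?thesis using xs(2) by simp
qed

lemma msum_list_r: "x \<in> M \<Longrightarrow> op_mult x (sum_list ys) = sum_list (map (op_mult x) ys)"
  by (induction ys) (auto simp: madd_r)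
lemma msum_list_l: "z \<in> M \<Longrightarrow> op_mult (sum_list ys) z = sum_list (map (\<lambda>y. op_mult y z) ys)"
  by (induction ys) (auto simp: madd_l)

lemma I_sub: "two_sided_ideal A I \<Longrightarrow> I \<subseteq> A" by (simp add: two_sided_ideal_def)
lemma I_zero: "two_sided_ideal A I \<Longrightarrow> 0 \<in> I" by (simp add: two_sided_ideal_def)
lemma I_diff: "two_sided_ideal A I \<Longrightarrow> x \<in> I \<Longrightarrow> y \<in> I \<Longrightarrow> x - y \<in> I" by (simp add: two_sided_ideal_def)
lemma I_lmult: "two_sided_ideal A I \<Longrightarrow> a \<in> A \<Longrightarrow> x \<in> I \<Longrightarrow> op_mult a x \<in> I" by (simp add: two_sided_ideal_def)
lemma I_rmult: "two_sided_ideal A I \<Longrightarrow> a \<in> A \<Longrightarrow> x \<in> I \<Longrightarrow> op_mult x a \<in> I" by (simp add: two_sided_ideal_def)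
lemma I_add: assumes "two_sided_ideal A I" "x \<in> I" "y \<in> I" shows "x + y \<in> I"
proof -
  have "0 - y \<in> I" using I_diff[OF assms(1) I_zero[OF assms(1)] assms(3)] .
  from I_diff[OF assms(1) assms(2) this] show ?thesis by simp
qed
lemma I_sum: "two_sided_ideal A I \<Longrightarrow> (\<And>k. k \<in> K \<Longrightarrow> f k \<in> I) \<Longrightarrow> (\<Sum>k\<in>K. f k) \<in> I"
proof (induction K rule: infinite_finite_induct)
  case (infinite K)
  have "(\<Sum>k\<in>K. f k) = 0" using infinite(1) by (rule sum.infinite)
  then show ?case using I_zero[OF infinite(2)] by (simp only:)
next
  case empty show ?case unfolding sum.empty by (rule I_zero[OF empty(1)])
next
  case (insert x F)
  then have "f x + (\<Sum>k\<in>F. f k) \<in> I" using I_add by simp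
  then show ?case unfolding sum.insert[OF insert(1,2)] .
qed
lemma I_scale: assumes "two_sided_ideal A I" "x \<in> I" shows "op_scale c x \<in> I"
proof -
  have xM: "x \<in> M" using assms I_sub A_M by blast
  have "op_scale c x = op_mult (op_scale c one) x" using mscale_l[OF xM] mone_l[OF xM] by simp
  then show ?thesis using I_lmult[OF assms(1) A_scale[OF A_one] assms(2)] by simp
qed

lemma sp_left: assumes I: "two_sided_ideal A I" and x: "x \<in> M" and s: "s \<in> sp I"
  shows "op_mult x s \<in> sp I"
proof -
  obtain n :: nat and a b where ab: "\<forall>i<n. a i \<in> A \<and> b i \<in> Ac" and xe: "x = (\<Sum>i<n. op_mult (a i) (b i))"
    using decomp[OF x] by blast
  obtain xs where xs: "set xs \<subseteq> I \<times> Ac" "s = sum_list (map (\<lambda>(i,b). op_mult i b) xs)"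
    using s unfolding sp_def by blast
  have sM: "s \<in> M" using sp_M[OF I_sub[OF I] s] .
  have t: "op_mult (op_mult (a k) (b k)) s \<in> sp I" if k: "k < n" for k
  proof -
    have akb: "a k \<in> A" "b k \<in> Ac" using ab k by auto
    have abM: "op_mult (a k) (b k) \<in> M" using akb A_M Ac_M Mat_mult by blast
    let ?ys = "map (\<lambda>(i,c). (op_mult (a k) i, op_mult (b k) c)) xs"
    have ys: "set ?ys \<subseteq> I \<times> Ac" using xs(1) akb I_lmult[OF I] Ac_mult by auto
    have "op_mult (op_mult (a k) (b k)) s = sum_list (map (op_mult (op_mult (a k) (b k))) (map (\<lambda>(i,b). op_mult i b) xs))"
      unfolding xs(2) by (rule msum_list_r[OF abM])
    also have "\<dots> = sum_list (map (\<lambda>(i,b). op_mult i b) ?ys)"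
    proof -
      have "map (op_mult (op_mult (a k) (b k))) (map (\<lambda>(i,b). op_mult i b) xs) = map (\<lambda>(i,b). op_mult i b) ?ys"
      proof (rule nth_equalityI)
        fix j assume "j < length (map (op_mult (op_mult (a k) (b k))) (map (\<lambda>(i,b). op_mult i b) xs))"
        then have j: "j < length xs" by simp
        obtain i c where ic: "xs ! j = (i, c)" by fastforce
        have "(i, c) \<in> I \<times> Ac" using xs(1) j ic nth_mem by fastforce
        then have "i \<in> A" "c \<in> Ac" using I_sub[OF I] by auto
        then show "map (op_mult (op_mult (a k) (b k))) (map (\<lambda>(i,b). op_mult i b) xs) ! j = map (\<lambda>(i,b). op_mult i b) ?ys ! j"
          using j ic swap4[OF akb(1) _ akb(2)] by simp
      qed simp
      then show ?thesis by (rule arg_cong)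
    qed
    finally show ?thesis using ys unfolding sp_def by blast
  qed
  have "op_mult x s = (\<Sum>k<n. op_mult (op_mult (a k) (b k)) s)" unfolding xe by (rule msum_l[OF sM])
  moreover have "(\<Sum>k<n. op_mult (op_mult (a k) (b k)) s) \<in> sp I" by (rule sp_sum) (use t in auto)
  ultimately show ?thesis by simp
qed

lemma sp_right: assumes I: "two_sided_ideal A I" and x: "x \<in> M" and s: "s \<in> sp I"
  shows "op_mult s x \<in> sp I"
proof -
  obtain n :: nat and a b where ab: "\<forall>i<n. a i \<in> A \<and> b i \<in> Ac" and xe: "x = (\<Sum>i<n. op_mult (a i) (b i))"
    using decomp[OF x] by blast
  obtain xs where xs: "set xs \<subseteq> I \<times> Ac" "s = sum_list (map (\<lambda>(i,b). op_mult i b) xs)"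
    using s unfolding sp_def by blast
  have sM: "s \<in> M" using sp_M[OF I_sub[OF I] s] .
  have t: "op_mult s (op_mult (a k) (b k)) \<in> sp I" if k: "k < n" for k
  proof -
    have akb: "a k \<in> A" "b k \<in> Ac" using ab k by auto
    have abM: "op_mult (a k) (b k) \<in> M" using akb A_M Ac_M Mat_mult by blast
    let ?ys = "map (\<lambda>(i,c). (op_mult i (a k), op_mult c (b k))) xs"
    have ys: "set ?ys \<subseteq> I \<times> Ac" using xs(1) akb I_rmult[OF I] Ac_mult by auto
    have "op_mult s (op_mult (a k) (b k)) = sum_list (map (\<lambda>y. op_mult y (op_mult (a k) (b k))) (map (\<lambda>(i,b). op_mult i b) xs))"
      unfolding xs(2) by (rule msum_list_l[OF abM])
    also have "\<dots> = sum_list (map (\<lambda>(i,b). op_mult i b) ?ys)"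
    proof -
      have "map (\<lambda>y. op_mult y (op_mult (a k) (b k))) (map (\<lambda>(i,b). op_mult i b) xs) = map (\<lambda>(i,b). op_mult i b) ?ys"
      proof (rule nth_equalityI)
        fix j assume "j < length (map (\<lambda>y. op_mult y (op_mult (a k) (b k))) (map (\<lambda>(i,b). op_mult i b) xs))"
        then have j: "j < length xs" by simp
        obtain i c where ic: "xs ! j = (i, c)" by fastforce
        have "(i, c) \<in> I \<times> Ac" using xs(1) j ic nth_mem by fastforce
        then have "i \<in> A" "c \<in> Ac" using I_sub[OF I] by auto
        then show "map (\<lambda>y. op_mult y (op_mult (a k) (b k))) (map (\<lambda>(i,b). op_mult i b) xs) ! j = map (\<lambda>(i,b). op_mult i b) ?ys ! j"
          using j ic swap4[OF _ akb(1) _ akb(2)] by simp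
      qed simp
      then show ?thesis by (rule arg_cong)
    qed
    finally show ?thesis using ys unfolding sp_def by blast
  qed
  have "op_mult s x = (\<Sum>k<n. op_mult s (op_mult (a k) (b k)))" unfolding xe by (rule msum_r[OF sM])
  moreover have "(\<Sum>k<n. op_mult s (op_mult (a k) (b k))) \<in> sp I" by (rule sp_sum) (use t in auto)
  ultimately show ?thesis by simp
qed

lemma sp_scale: assumes I: "two_sided_ideal A I" and s: "s \<in> sp I" shows "op_scale d s \<in> sp I"
proof -
  have sM: "s \<in> M" using sp_M[OF I_sub[OF I] s] .
  have "op_scale d s = op_mult (op_scale d one) s" using mscale_l[OF sM] mone_l[OF sM] by simp
  then show ?thesis using sp_left[OF I Mat_scale[OF Mat_one] s] by simp
qed

end

context lat begin

lemma opow_loc: "loc U h \<Longrightarrow> loc U (opow one h n)"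
  by (induction n) (auto intro: loc_one loc_mult dest: loc_fin loc_sub)

lemma opow_M: "h \<in> M \<Longrightarrow> opow one h n \<in> M"
  by (induction n) (auto intro: Mat_one Mat_mult)

lemma opow_Suc': "h \<in> M \<Longrightarrow> op_mult (opow one h n) h = opow one h (Suc n)"
proof (induction n)
  case 0 then show ?case using mone_l mone_r by simp
next
  case (Suc n)
  have "op_mult (opow one h (Suc n)) h = op_mult h (op_mult (opow one h n) h)"
    using massoc[OF Suc(2) opow_M[OF Suc(2)]] by simp
  also have "\<dots> = opow one h (Suc (Suc n))" using Suc by simp
  finally show ?case .
qed

lemma opow_adj: "h \<in> M \<Longrightarrow> op_adj h = h \<Longrightarrow> op_adj (opow one h n) = opow one h n"
proof (induction n)
  case 0 then show ?case by simp
next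
  case (Suc n)
  have "op_adj (opow one h (Suc n)) = op_mult (opow one h n) h" using Suc by (simp add: adj_mult)
  also have "\<dots> = opow one h (Suc n)" using opow_Suc'[OF Suc(2)] .
  finally show ?case .
qed

lemma faithful1: assumes "y \<in> M" "op_mult y (op_adj y) = 0" shows "y = 0"
  using faithful[of "{()}" "\<lambda>_. y"] assms by simp

lemma R: assumes hM: "h \<in> M" and hs: "op_adj h = h"
  shows "(\<Sum>j<N. op_scale (c j) (opow one h (Suc j))) = 0 \<Longrightarrow> (\<exists>j<N. c j \<noteq> 0) \<Longrightarrow>
         \<exists>(m::nat) d. op_mult (\<Sum>j<m. op_scale (d j) (opow one h (Suc j))) h = h"
proof (induction N arbitrary: c)
  case 0 then show ?case by simp
next
  case (Suc N)
  let ?P = "opow one h"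
  have P1: "?P (Suc 0) = h" using mone_r[OF hM] by simp
  define S' where "S' = (\<Sum>j<N. op_scale (c (Suc j)) (?P (Suc (Suc j))))"
  have e: "(\<Sum>j<Suc N. op_scale (c j) (?P (Suc j))) = op_scale (c 0) (?P (Suc 0)) + S'"
    unfolding S'_def by (rule sum.lessThan_Suc_shift)
  have rel: "op_scale (c 0) h + S' = 0"
    using Suc(2)[unfolded e P1] .
  show ?case
  proof (cases "c 0 = 0")
    case False
    define d where "d j = - c (Suc j) / c 0" for j
    have "op_mult (\<Sum>j<N. op_scale (d j) (?P (Suc j))) h = (\<Sum>j<N. op_scale (d j) (?P (Suc (Suc j))))"
      unfolding msum_l[OF hM] mscale_l[OF hM] opow_Suc'[OF hM] ..
    also have "\<dots> = op_scale (- 1 / c 0) S'"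
      unfolding S'_def scale_sum scale_scale d_def by (simp add: field_simps)
    also have "S' = - op_scale (c 0) h" using rel by (simp add: eq_neg_iff_add_eq_0 add.commute)
    also have "op_scale (- 1 / c 0) (- op_scale (c 0) h) = h"
      using False by (simp add: op_scale_def fun_eq_iff)
    finally show ?thesis by blast
  next
    case True
    define V where "V = (\<Sum>j<N. op_scale (c (Suc j)) (?P j))"
    define W where "W = (\<Sum>j<N. op_scale (c (Suc j)) (?P (Suc j)))"
    have VM: "V \<in> M" unfolding V_def by (intro Mat_sum Mat_scale opow_M[OF hM])
    have W: "W = op_mult h V" unfolding V_def W_def msum_r[OF hM] mscale_r[OF hM] by simp
    have S: "S' = op_mult h W" unfolding S'_def W_def msum_r[OF hM] mscale_r[OF hM] by simp
    have "S' = 0" using rel True by simp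
    then have hW: "op_mult h W = 0" using S by simp
    have WM: "W \<in> M" using W Mat_mult[OF hM VM] by simp
    have "op_mult (op_adj W) W = op_mult (op_mult (op_adj V) h) (op_mult h V)"
      using W hs by (simp add: adj_mult)
    also have "\<dots> = op_mult (op_adj V) (op_mult h (op_mult h V))"
      using massoc[OF Mat_adj[OF VM] hM] by simp
    also have "\<dots> = 0" using hW W by simp
    finally have "op_mult (op_adj W) (op_adj (op_adj W)) = 0" by simp
    then have "op_adj W = 0" using faithful1[OF Mat_adj[OF WM]] by simp
    then have W0: "W = 0" using adj_adj[of W] by simp
    obtain j where j: "j < Suc N" "c j \<noteq> 0" using Suc(3) by blast
    then obtain j' where "j = Suc j'" "j' < N" using True by (cases j) auto
    then have "\<exists>j<N. (c \<circ> Suc) j \<noteq> 0" using j by auto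
    moreover have "(\<Sum>j<N. op_scale ((c \<circ> Suc) j) (?P (Suc j))) = 0" using W0 unfolding W_def by simp
    ultimately show ?thesis using Suc(1) by blast
  qed
qed

end

context inv begin

lemma opow_A: "h \<in> A \<Longrightarrow> opow one h n \<in> A"
  by (induction n) (auto intro: A_one A_mult)

lemma proj_exists: assumes I: "two_sided_ideal A I" and hI: "h \<in> I" and hs: "op_adj h = h"
  shows "\<exists>q\<in>I. op_mult q h = h"
proof -
  have hA: "h \<in> A" using hI I_sub[OF I] by blast
  have hM: "h \<in> M" using A_M[OF hA] .
  obtain U where hU: "loc U h" using hM[unfolded Mat_iff] by blast
  have U: "finite U" "U \<subseteq> sites D" using loc_fin[OF hU] loc_sub[OF hU] by auto
  define X where "X = Cfg U \<times> Cfg U"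
  have fX: "finite X" unfolding X_def using Nb_finite[OF U(1)] by simp
  define NN where "NN = Suc (card X)"
  have "card X < card {..<NN}" by (simp add: NN_def)
  from fin_dep[OF fX _ this, of "\<lambda>j x. opow one h (Suc j) (fst x) (snd x)"]
  obtain c where c: "\<exists>j\<in>{..<NN}. c j \<noteq> 0"
    "\<forall>x\<in>X. (\<Sum>j\<in>{..<NN}. c j * opow one h (Suc j) (fst x) (snd x)) = 0" by auto
  define q where "q = (\<Sum>j<NN. op_scale (c j) (opow one h (Suc j)))"
  have qU: "loc U q" unfolding q_def by (intro loc_sum U loc_scale opow_loc hU)
  have qv: "q \<alpha> \<beta> = 0" if "\<alpha> \<in> Cfg U" "\<beta> \<in> Cfg U" for \<alpha> \<beta>
  proof -
    have "q \<alpha> \<beta> = (\<Sum>j<NN. c j * opow one h (Suc j) \<alpha> \<beta>)"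
      unfolding q_def sum_apply2 by (simp add: op_scale_def)
    also have "\<dots> = 0" using c(2) that unfolding X_def by auto
    finally show ?thesis .
  qed
  have "q = (\<Sum>\<alpha>\<in>Cfg U. \<Sum>\<beta>\<in>Cfg U. op_scale (q \<alpha> \<beta>) (EU U \<alpha> \<beta>))" by (rule expansion[OF qU])
  also have "\<dots> = 0" using qv by simp
  finally have q0: "q = 0" .
  from R[OF hM hs q0[unfolded q_def]] c(1) obtain m :: nat and d where
    md: "op_mult (\<Sum>j<m. op_scale (d j) (opow one h (Suc j))) h = h" by auto
  have "opow one h (Suc j) \<in> I" for j
    using I_rmult[OF I opow_A[OF hA] hI] by simp
  then have "(\<Sum>j<m. op_scale (d j) (opow one h (Suc j))) \<in> I"
    by (intro I_sum[OF I] I_scale[OF I])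
  then show ?thesis using md by blast
qed

end

context inv begin

lemma sum_list_nth: "sum_list (map f xs) = (\<Sum>k<length xs. f (xs ! k))"
  by (simp add: sum_list_sum_nth atLeast0LessThan)

lemma one_in_ideal: assumes I: "two_sided_ideal A I" and w: "w \<in> I" "w \<noteq> 0"
  shows "one \<in> I"
proof -
  have wA: "w \<in> A" using w I_sub[OF I] by blast
  have wM: "w \<in> M" using A_M[OF wA] .
  obtain U \<alpha>0 \<beta>0 c where U: "finite U" "U \<subseteq> sites D" and c: "c \<noteq> 0"
    and su: "(\<Sum>\<gamma>\<in>Cfg U. op_mult (op_mult (EU U \<gamma> \<alpha>0) w) (EU U \<beta>0 \<gamma>)) = op_scale c one"
    using unit_lemma[OF wM w(2)] by blast
  have EM: "EU U \<alpha> \<beta> \<in> M" for \<alpha> \<beta> using loc_EU[OF U] Mat_loc by blast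
  have wsp: "w \<in> sp I" using sp_base[OF w(1) Ac_one] mone_r[OF wM] by simp
  have "op_scale c one \<in> sp I"
    unfolding su[symmetric] by (intro sp_sum sp_right[OF I EM] sp_left[OF I EM] wsp)
  then have "op_scale (1/c) (op_scale c one) \<in> sp I" by (rule sp_scale[OF I])
  then have "one \<in> sp I" using c by (simp add: scale_scale)
  then obtain xs where xs: "set xs \<subseteq> I \<times> Ac" "one = sum_list (map (\<lambda>(i,b). op_mult i b) xs)"
    unfolding sp_def by blast
  define n where "n = length xs"
  define i where "i k = fst (xs ! k)" for k
  define b where "b k = snd (xs ! k)" for k
  have ib: "i k \<in> I \<and> b k \<in> Ac" if "k < n" for k
  proof -
    have "xs ! k \<in> I \<times> Ac" using xs(1) nth_mem[of k xs] that unfolding n_def by blast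
    then show ?thesis unfolding i_def b_def by (simp add: mem_Times_iff)
  qed
  then have ib1: "i k \<in> I" and ib2: "b k \<in> Ac" if "k < n" for k using that by auto
  have iA: "i k \<in> A" if "k < n" for k using ib1[OF that] I_sub[OF I] by blast
  have iM: "i k \<in> M" if "k < n" for k using A_M[OF iA[OF that]] .
  have bM: "b k \<in> M" if "k < n" for k using Ac_M[OF ib2[OF that]] .
  have one_e: "one = (\<Sum>k<n. op_mult (i k) (b k))"
    using xs(2) unfolding sum_list_nth n_def i_def b_def by (simp add: case_prod_beta)
  define h where "h = (\<Sum>k<n. op_mult (i k) (op_adj (i k)))"
  have hI: "h \<in> I" unfolding h_def
    by (intro I_sum[OF I] I_rmult[OF I A_adj[OF iA]] ib1) auto
  have hM: "h \<in> M" using hI I_sub[OF I] A_M by blast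
  have hs: "op_adj h = h" unfolding h_def adj_sum adj_mult adj_adj ..
  obtain q where qI: "q \<in> I" and qh: "op_mult q h = h" using proj_exists[OF I hI hs] by blast
  have qM: "q \<in> M" using qI I_sub[OF I] A_M by blast
  define r where "r = one - q"
  have rM: "r \<in> M" unfolding r_def using Mat_diff[OF Mat_one qM] .
  have rh: "op_mult r h = 0" unfolding r_def mdiff_l[OF hM] mone_l[OF hM] qh by simp
  define y where "y k = op_mult r (i k)" for k
  have yM: "y k \<in> M" if "k < n" for k unfolding y_def using Mat_mult[OF rM iM[OF that]] .
  have yy: "op_mult (y k) (op_adj (y k)) = op_mult (op_mult r (op_mult (i k) (op_adj (i k)))) (op_adj r)"
    if k: "k < n" for k
  proof -
    have "op_mult (y k) (op_adj (y k)) = op_mult (op_mult r (i k)) (op_mult (op_adj (i k)) (op_adj r))"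
      unfolding y_def adj_mult ..
    also have "\<dots> = op_mult r (op_mult (i k) (op_mult (op_adj (i k)) (op_adj r)))"
      using massoc[OF rM iM[OF k]] by simp
    also have "op_mult (i k) (op_mult (op_adj (i k)) (op_adj r)) = op_mult (op_mult (i k) (op_adj (i k))) (op_adj r)"
      using massoc[OF iM[OF k] Mat_adj[OF iM[OF k]]] by simp
    also have "op_mult r (op_mult (op_mult (i k) (op_adj (i k))) (op_adj r)) = op_mult (op_mult r (op_mult (i k) (op_adj (i k)))) (op_adj r)"
      using massoc[OF rM Mat_mult[OF iM[OF k] Mat_adj[OF iM[OF k]]]] by simp
    finally show ?thesis .
  qed
  have "(\<Sum>k<n. op_mult (y k) (op_adj (y k))) = (\<Sum>k<n. op_mult (op_mult r (op_mult (i k) (op_adj (i k)))) (op_adj r))"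
    using yy by (intro sum.cong) auto
  also have "\<dots> = op_mult (op_mult r h) (op_adj r)"
    unfolding h_def msum_l[OF Mat_adj[OF rM]] msum_r[OF rM] ..
  also have "\<dots> = 0" using rh by simp
  finally have y0: "\<forall>k\<in>{..<n}. y k = 0" using faithful[of "{..<n}" y] yM by auto
  have qi: "op_mult q (i k) = i k" if k: "k < n" for k
  proof -
    have "op_mult (one - q) (i k) = 0" using y0 k unfolding y_def r_def by simp
    then have "op_mult one (i k) - op_mult q (i k) = 0" using mdiff_l[OF iM[OF k]] by simp
    then show ?thesis using mone_l[OF iM[OF k]] by simp
  qed
  have "q = op_mult q one" using mone_r[OF qM] by simp
  also have "\<dots> = (\<Sum>k<n. op_mult q (op_mult (i k) (b k)))" unfolding one_e msum_r[OF qM] ..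
  also have "\<dots> = (\<Sum>k<n. op_mult (i k) (b k))"
  proof (rule sum.cong[OF refl])
    fix k assume "k \<in> {..<n}"
    then have k: "k < n" by simp
    show "op_mult q (op_mult (i k) (b k)) = op_mult (i k) (b k)"
      using massoc[OF qM iM[OF k]] qi[OF k] by simp
  qed
  also have "\<dots> = one" using one_e by simp
  finally show ?thesis using qI by simp
qed

lemma simple: "simple_subalg A"
  unfolding simple_subalg_def
proof (intro allI impI)
  fix I assume I: "two_sided_ideal A I"
  show "I = {0} \<or> I = A"
  proof (cases "I = {0}")
    case False
    then obtain w where w: "w \<in> I" "w \<noteq> 0" using I_zero[OF I] by blast
    have oneI: "one \<in> I" by (rule one_in_ideal[OF I w])
    have "A \<subseteq> I"
    proof
      fix a assume a: "a \<in> A"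
      have "op_mult a one \<in> I" by (rule I_lmult[OF I a oneI])
      then show "a \<in> I" using mone_r[OF A_M[OF a]] by simp
    qed
    then show ?thesis using I_sub[OF I] by blast
  qed simp
qed

end

context inv begin

lemma central_elem: "z \<in> A \<Longrightarrow> (\<forall>y\<in>A. op_mult z y = op_mult y z) \<Longrightarrow> \<exists>c. z = op_scale c one"
  using central unfolding central_subalg_def by blast

lemma Ldisj:
  fixes K :: "'i set"
  assumes "finite K"
  shows "(\<forall>k\<in>K. a k \<in> A) \<Longrightarrow> (\<forall>k\<in>K. b k \<in> Ac) \<Longrightarrow>
    (\<forall>lam. (\<Sum>k\<in>K. op_scale (lam k) (b k)) = 0 \<longrightarrow> (\<forall>k\<in>K. lam k = 0)) \<Longrightarrow>
    (\<Sum>k\<in>K. op_mult (a k) (b k)) = 0 \<Longrightarrow> \<forall>k\<in>K. a k = 0"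
  using assms
proof (induction K arbitrary: a rule: finite_induct)
  case empty then show ?case by simp
next
  case (insert j K0)
  have aA: "\<forall>k\<in>K0. a k \<in> A" "a j \<in> A" using insert(4) by auto
  have bAc: "\<forall>k\<in>K0. b k \<in> Ac" "b j \<in> Ac" using insert(5) by auto
  have bM: "b k \<in> M" if "k \<in> insert j K0" for k using insert(5) that Ac_M by blast
  have ind0: "\<forall>lam. (\<Sum>k\<in>K0. op_scale (lam k) (b k)) = 0 \<longrightarrow> (\<forall>k\<in>K0. lam k = 0)"
  proof (intro allI impI)
    fix lam assume l: "(\<Sum>k\<in>K0. op_scale (lam k) (b k)) = 0"
    have s1: "(\<Sum>k\<in>K0. op_scale ((lam(j := 0)) k) (b k)) = (\<Sum>k\<in>K0. op_scale (lam k) (b k))"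
      by (rule sum.cong[OF refl]) (use insert(2) in auto)
    have "(\<Sum>k\<in>insert j K0. op_scale ((lam(j := 0)) k) (b k)) = op_scale 0 (b j) + (\<Sum>k\<in>K0. op_scale (lam k) (b k))"
      unfolding sum.insert[OF insert(1,2)] s1 by simp
    also have "\<dots> = 0" using l by simp
    finally have "\<forall>k\<in>insert j K0. (lam(j := 0)) k = 0" using insert(6) by blast
    then have u: "\<forall>k\<in>insert j K0. (lam(j := 0)) k = 0" .
    show "\<forall>k\<in>K0. lam k = 0"
    proof
      fix k assume k: "k \<in> K0"
      then have "k \<noteq> j" using insert(2) by auto
      then have "(lam(j := 0)) k = lam k" by simp
      moreover have "(lam(j := 0)) k = 0" using u k by blast
      ultimately show "lam k = 0" by simp
    qed
  qed
  have rel: "op_mult (a j) (b j) + (\<Sum>k\<in>K0. op_mult (a k) (b k)) = 0"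
    using insert(7) unfolding sum.insert[OF insert(1,2)] .
  show ?case
  proof (cases "a j = 0")
    case True
    then have "(\<Sum>k\<in>K0. op_mult (a k) (b k)) = 0" using rel by simp
    then have "\<forall>k\<in>K0. a k = 0" using insert(3)[OF aA(1) bAc(1) ind0] by blast
    show ?thesis
    proof
      fix k assume "k \<in> insert j K0"
      then have "k = j \<or> k \<in> K0" by simp
      then show "a k = 0" using True \<open>\<forall>k\<in>K0. a k = 0\<close> by (elim disjE) auto
    qed
  next
    case False
    define J where "J = {c \<in> A. \<exists>h. (\<forall>k\<in>K0. h k \<in> A) \<and> op_mult c (b j) + (\<Sum>k\<in>K0. op_mult (h k) (b k)) = 0}"
    have bjM: "b j \<in> M" using bM by simp
    have bkM: "\<And>k. k \<in> K0 \<Longrightarrow> b k \<in> M" using bM by simp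
    have JI: "two_sided_ideal A J"
      unfolding two_sided_ideal_def
    proof (intro conjI ballI)
      show "J \<subseteq> A" unfolding J_def by blast
      show "0 \<in> J" unfolding J_def using A_zero by (intro CollectI conjI exI[of _ "\<lambda>_. 0"]) auto
    next
      fix x y assume x: "x \<in> J" and y: "y \<in> J"
      obtain hx where hx: "\<forall>k\<in>K0. hx k \<in> A" "op_mult x (b j) + (\<Sum>k\<in>K0. op_mult (hx k) (b k)) = 0" "x \<in> A"
        using x unfolding J_def by blast
      obtain hy where hy: "\<forall>k\<in>K0. hy k \<in> A" "op_mult y (b j) + (\<Sum>k\<in>K0. op_mult (hy k) (b k)) = 0" "y \<in> A"
        using y unfolding J_def by blast
      have "op_mult (x - y) (b j) + (\<Sum>k\<in>K0. op_mult (hx k - hy k) (b k)) =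
          (op_mult x (b j) + (\<Sum>k\<in>K0. op_mult (hx k) (b k))) - (op_mult y (b j) + (\<Sum>k\<in>K0. op_mult (hy k) (b k)))"
        unfolding mdiff_l[OF bjM]
        using mdiff_l[OF bkM] by (simp add: sum_subtractf)
      also have "\<dots> = 0" using hx(2) hy(2) by simp
      finally show "x - y \<in> J" unfolding J_def using hx(1,3) hy(1,3) A_diff
        by (intro CollectI conjI exI[of _ "\<lambda>k. hx k - hy k"]) auto
    next
      fix a x assume a: "a \<in> A" and x: "x \<in> J"
      obtain hx where hx: "\<forall>k\<in>K0. hx k \<in> A" "op_mult x (b j) + (\<Sum>k\<in>K0. op_mult (hx k) (b k)) = 0" "x \<in> A"
        using x unfolding J_def by blast
      have aM: "a \<in> M" using A_M[OF a] .
      have xM: "x \<in> M" using A_M[OF hx(3)] .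
      have hM: "k \<in> K0 \<Longrightarrow> hx k \<in> M" for k using hx(1) A_M by blast
      have "op_mult (op_mult a x) (b j) + (\<Sum>k\<in>K0. op_mult (op_mult a (hx k)) (b k)) =
           op_mult a (op_mult x (b j) + (\<Sum>k\<in>K0. op_mult (hx k) (b k)))"
        unfolding madd_r[OF aM] msum_r[OF aM] massoc[OF aM xM]
        using massoc[OF aM hM] by simp
      also have "\<dots> = 0" using hx(2) by simp
      finally show "op_mult a x \<in> J" unfolding J_def using hx(1,3) A_mult[OF a] a
        by (intro CollectI conjI exI[of _ "\<lambda>k. op_mult a (hx k)"]) auto
      have sw: "op_mult (op_mult y a) (b k) = op_mult (op_mult y (b k)) a" if "y \<in> A" "b k \<in> Ac" for y k
      proof -
        have yM: "y \<in> M" using A_M[OF that(1)] .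
        have "op_mult (op_mult y a) (b k) = op_mult y (op_mult a (b k))" using massoc[OF yM aM] by simp
        also have "\<dots> = op_mult y (op_mult (b k) a)" using Ac_comm[OF a that(2)] by simp
        also have "\<dots> = op_mult (op_mult y (b k)) a" using massoc[OF yM Ac_M[OF that(2)]] by simp
        finally show ?thesis .
      qed
      have "op_mult (op_mult x a) (b j) + (\<Sum>k\<in>K0. op_mult (op_mult (hx k) a) (b k)) =
           op_mult (op_mult x (b j) + (\<Sum>k\<in>K0. op_mult (hx k) (b k))) a"
        unfolding madd_l[OF aM] msum_l[OF aM] sw[OF hx(3) bAc(2)]
        using sw hx(1) bAc(1) by simp
      also have "\<dots> = 0" using hx(2) by simp
      finally show "op_mult x a \<in> J" unfolding J_def using hx(1,3) A_mult[OF _ a] a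
        by (intro CollectI conjI exI[of _ "\<lambda>k. op_mult (hx k) a"]) auto
    qed
    have "a j \<in> J" unfolding J_def using aA rel by blast
    then have "J \<noteq> {0}" using False by blast
    then have "J = A" using simple JI unfolding simple_subalg_def by blast
    then have "one \<in> J" using A_one by simp
    then obtain h where h: "\<forall>k\<in>K0. h k \<in> A" "op_mult one (b j) + (\<Sum>k\<in>K0. op_mult (h k) (b k)) = 0"
      unfolding J_def by blast
    have hM: "k \<in> K0 \<Longrightarrow> h k \<in> M" for k using h(1) A_M by blast
    have hrel: "b j + (\<Sum>k\<in>K0. op_mult (h k) (b k)) = 0" using h(2) mone_l[OF bjM] by simp
    have comm: "op_mult (h k) d = op_mult d (h k)" if d: "d \<in> A" and k: "k \<in> K0" for d k
    proof -
      have dM: "d \<in> M" using A_M[OF d] .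
      have sw: "op_mult (op_mult (h k) (b k)) d = op_mult (op_mult (h k) d) (b k)" if "k \<in> K0" for k
      proof -
        have "op_mult (op_mult (h k) (b k)) d = op_mult (h k) (op_mult (b k) d)" using massoc[OF hM[OF that] bkM[OF that]] by simp
        also have "\<dots> = op_mult (h k) (op_mult d (b k))" using Ac_comm[OF d] bAc(1) that by simp
        also have "\<dots> = op_mult (op_mult (h k) d) (b k)" using massoc[OF hM[OF that] dM] by simp
        finally show ?thesis .
      qed
      have "(\<Sum>k\<in>K0. op_mult (op_mult d (h k) - op_mult (h k) d) (b k)) =
            op_mult d (b j + (\<Sum>k\<in>K0. op_mult (h k) (b k))) - op_mult (b j + (\<Sum>k\<in>K0. op_mult (h k) (b k))) d"
      proof -
        have "op_mult d (b j + (\<Sum>k\<in>K0. op_mult (h k) (b k))) = op_mult d (b j) + (\<Sum>k\<in>K0. op_mult (op_mult d (h k)) (b k))"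
          unfolding madd_r[OF dM] msum_r[OF dM] using massoc[OF dM hM] by simp
        moreover have "op_mult (b j + (\<Sum>k\<in>K0. op_mult (h k) (b k))) d = op_mult (b j) d + (\<Sum>k\<in>K0. op_mult (op_mult (h k) d) (b k))"
          unfolding madd_l[OF dM] msum_l[OF dM] using sw by simp
        moreover have "op_mult d (b j) = op_mult (b j) d" using Ac_comm[OF d bAc(2)] .
        moreover have "(\<Sum>k\<in>K0. op_mult (op_mult d (h k) - op_mult (h k) d) (b k)) =
            (\<Sum>k\<in>K0. op_mult (op_mult d (h k)) (b k)) - (\<Sum>k\<in>K0. op_mult (op_mult (h k) d) (b k))"
          using mdiff_l[OF bkM] by (simp add: sum_subtractf)
        ultimately show ?thesis by simp
      qed
      also have "\<dots> = 0" using hrel by simp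
      finally have z: "(\<Sum>k\<in>K0. op_mult (op_mult d (h k) - op_mult (h k) d) (b k)) = 0" .
      have "\<forall>k\<in>K0. op_mult d (h k) - op_mult (h k) d = 0"
      proof (rule insert(3)[OF _ bAc(1) ind0 z], intro ballI)
        fix k assume "k \<in> K0"
        then have hk: "h k \<in> A" using h(1) by blast
        show "op_mult d (h k) - op_mult (h k) d \<in> A" by (rule A_diff[OF A_mult[OF d hk] A_mult[OF hk d]])
      qed
      then show ?thesis using k by simp
    qed
    have "\<exists>\<mu>. h k = op_scale \<mu> one" if k: "k \<in> K0" for k
      using central_elem[of "h k"] h(1) k comm by metis
    then obtain \<mu> where \<mu>: "\<And>k. k \<in> K0 \<Longrightarrow> h k = op_scale (\<mu> k) one" by metis
    define lam where "lam k = (if k = j then 1 else \<mu> k)" for k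
    have "(\<Sum>k\<in>insert j K0. op_scale (lam k) (b k)) = b j + (\<Sum>k\<in>K0. op_scale (\<mu> k) (b k))"
    proof -
      have s1: "(\<Sum>k\<in>K0. op_scale (lam k) (b k)) = (\<Sum>k\<in>K0. op_scale (\<mu> k) (b k))"
        by (rule sum.cong[OF refl]) (use insert(2) in \<open>auto simp: lam_def\<close>)
      show ?thesis unfolding sum.insert[OF insert(1,2)] s1 by (simp add: lam_def)
    qed
    also have "(\<Sum>k\<in>K0. op_scale (\<mu> k) (b k)) = (\<Sum>k\<in>K0. op_mult (h k) (b k))"
      using \<mu> mscale_l[OF bkM] mone_l[OF bkM] by (intro sum.cong) auto
    also have "b j + \<dots> = 0" by (rule hrel)
    finally have "\<forall>k\<in>insert j K0. lam k = 0" using insert(6) by blast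
    then have False by (simp add: lam_def)
    then show ?thesis ..
  qed
qed


lemma sum_option: "finite K \<Longrightarrow> (\<Sum>q\<in>insert None (Some ` K). F q) = F None + (\<Sum>k\<in>K. F (Some k))"
proof -
  assume K: "finite K"
  have "None \<notin> Some ` K" by auto
  then have "(\<Sum>q\<in>insert None (Some ` K). F q) = F None + (\<Sum>q\<in>Some ` K. F q)" using K by simp
  also have "(\<Sum>q\<in>Some ` K. F q) = (\<Sum>k\<in>K. F (Some k))" by (simp add: sum.reindex)
  finally show ?thesis .
qed

lemma one_z0: "one z0 z0 = 1" using zero_Conf by (simp add: op_one_def)

lemma KEY:
  assumes V: "V \<subseteq> A" "0 \<in> V" "\<And>x y. x \<in> V \<Longrightarrow> y \<in> V \<Longrightarrow> x + y \<in> V" "\<And>c x. x \<in> V \<Longrightarrow> op_scale c x \<in> V"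
  shows "finite K \<Longrightarrow> y \<in> A \<Longrightarrow> (\<forall>k\<in>K. g k \<in> V) \<Longrightarrow> (\<forall>k\<in>K. cc k \<in> Ac) \<Longrightarrow>
         y = (\<Sum>k\<in>K. op_mult (g k) (cc k)) \<Longrightarrow> y \<in> V"
proof (induction K arbitrary: y g rule: finite_psubset_induct)
  case (psubset K)
  have gM: "g k \<in> M" if "k \<in> K" for k using psubset(4) that V(1) A_M by blast
  have gA: "g k \<in> A" if "k \<in> K" for k using psubset(4) that V(1) by blast
  have cM: "cc k \<in> M" if "k \<in> K" for k using psubset(5) that Ac_M by blast
  show ?case
  proof (cases "\<exists>\<mu> lam. op_scale \<mu> one + (\<Sum>k\<in>K. op_scale (lam k) (cc k)) = 0 \<and> (\<exists>j\<in>K. lam j \<noteq> 0)")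
    case True
    then obtain \<mu> lam j where rel0: "op_scale \<mu> one + (\<Sum>k\<in>K. op_scale (lam k) (cc k)) = 0"
      and j: "j \<in> K" "lam j \<noteq> 0" by blast
    define K' where "K' = K - {j}"
    have K'K: "K' \<subset> K" using j(1) unfolding K'_def by blast
    define T where "T = (\<Sum>k\<in>K'. op_scale (lam k) (cc k))"
    have rel: "op_scale \<mu> one + (op_scale (lam j) (cc j) + T) = 0"
      using rel0 unfolding T_def K'_def sum.remove[OF psubset(1) j(1)] .
    have ccj: "cc j = op_scale (-1 / lam j) (op_scale \<mu> one + T)"
    proof (intro ext)
      fix \<sigma> \<tau>
      have h: "\<mu> * one \<sigma> \<tau> + (lam j * cc j \<sigma> \<tau> + T \<sigma> \<tau>) = 0"
        using fun_cong[OF fun_cong[OF rel, of \<sigma>], of \<tau>] by (simp add: op_scale_def)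
      have "lam j * cc j \<sigma> \<tau> = - (\<mu> * one \<sigma> \<tau> + T \<sigma> \<tau>)" using h by algebra
      then have "cc j \<sigma> \<tau> = (-1 / lam j) * (\<mu> * one \<sigma> \<tau> + T \<sigma> \<tau>)"
        using j(2) by (simp add: field_simps)
      then show "cc j \<sigma> \<tau> = op_scale (-1 / lam j) (op_scale \<mu> one + T) \<sigma> \<tau>"
        by (simp add: op_scale_def)
    qed
    have gjM: "g j \<in> M" using gM j(1) .
    have cM': "k \<in> K' \<Longrightarrow> cc k \<in> M" for k using cM unfolding K'_def by blast
    have gcj: "op_mult (g j) (cc j) = op_scale (-1 / lam j) (op_scale \<mu> (g j) + (\<Sum>k\<in>K'. op_scale (lam k) (op_mult (g j) (cc k))))"
      unfolding ccj mscale_r[OF gjM] madd_r[OF gjM] mone_r[OF gjM] T_def msum_r[OF gjM]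
      by (simp add: mscale_r[OF gjM])
    have ye: "y = op_mult (g j) (cc j) + (\<Sum>k\<in>K'. op_mult (g k) (cc k))"
      using psubset(6) unfolding K'_def sum.remove[OF psubset(1) j(1)] .
    define y' where "y' = y + op_scale (\<mu> / lam j) (g j)"
    define g' where "g' k = g k - op_scale (lam k / lam j) (g j)" for k
    have y'e: "y' = (\<Sum>k\<in>K'. op_mult (g' k) (cc k))"
    proof -
      have r: "(\<Sum>k\<in>K'. op_mult (g' k) (cc k)) = (\<Sum>k\<in>K'. op_mult (g k) (cc k) - op_scale (lam k / lam j) (op_mult (g j) (cc k)))"
        unfolding g'_def by (rule sum.cong[OF refl]) (simp add: mdiff_l[OF cM'] mscale_l[OF cM'])
      show ?thesis unfolding r y'_def ye gcj
        using j(2) by (intro ext) (simp add: sum_apply2 op_scale_def sum_subtractf sum_distrib_left field_simps)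
    qed
    have Vdiff: "x \<in> V \<Longrightarrow> z \<in> V \<Longrightarrow> x - op_scale c z \<in> V" for x z c
    proof -
      assume xz: "x \<in> V" "z \<in> V"
      have e: "x - op_scale c z = x + op_scale (- c) z" by (simp add: op_scale_def fun_eq_iff)
      have "x + op_scale (- c) z \<in> V" by (rule V(3)[OF xz(1) V(4)[OF xz(2)]])
      then show ?thesis unfolding e .
    qed
    have g'V: "\<forall>k\<in>K'. g' k \<in> V" unfolding g'_def K'_def using psubset(4) j(1) Vdiff by blast
    have y'A: "y' \<in> A" unfolding y'_def using A_add[OF psubset(3) A_scale[OF gA[OF j(1)]]] .
    have "y' \<in> V" using psubset(2)[OF K'K y'A g'V _ y'e] psubset(5) K'K by blast
    moreover have "y = y' - op_scale (\<mu> / lam j) (g j)" unfolding y'_def by simp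
    ultimately show ?thesis using Vdiff[of y' "g j" "\<mu> / lam j"] psubset(4) j(1) by metis
  next
    case False
    define KK where "KK = insert None (Some ` K)"
    define a where "a q = (case q of None \<Rightarrow> y | Some k \<Rightarrow> op_scale (-1) (g k))" for q
    define b where "b q = (case q of None \<Rightarrow> one | Some k \<Rightarrow> cc k)" for q
    have fKK: "finite KK" unfolding KK_def using psubset(1) by simp
    have aA: "\<forall>q\<in>KK. a q \<in> A" unfolding KK_def a_def using psubset(3) gA A_scale by auto
    have bAc: "\<forall>q\<in>KK. b q \<in> Ac" unfolding KK_def b_def using psubset(5) Ac_one by auto
    have ind: "\<forall>lam. (\<Sum>q\<in>KK. op_scale (lam q) (b q)) = 0 \<longrightarrow> (\<forall>q\<in>KK. lam q = 0)"
    proof (intro allI impI)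
      fix lam assume l: "(\<Sum>q\<in>KK. op_scale (lam q) (b q)) = 0"
      then have l': "op_scale (lam None) one + (\<Sum>k\<in>K. op_scale ((lam \<circ> Some) k) (cc k)) = 0"
        unfolding KK_def sum_option[OF psubset(1)] b_def by simp
      then have s0: "\<forall>k\<in>K. (lam \<circ> Some) k = 0" using False by blast
      then have "(\<Sum>k\<in>K. op_scale ((lam \<circ> Some) k) (cc k)) = 0" by simp
      then have "op_scale (lam None) one = 0" using l' by simp
      then have "op_scale (lam None) one z0 z0 = 0" by simp
      then have "lam None = 0" using one_z0 by (simp add: op_scale_def)
      then show "\<forall>q\<in>KK. lam q = 0" using s0 unfolding KK_def by auto
    qed
    have "(\<Sum>q\<in>KK. op_mult (a q) (b q)) = op_mult y one + (\<Sum>k\<in>K. op_mult (op_scale (-1) (g k)) (cc k))"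
      unfolding KK_def sum_option[OF psubset(1)] a_def b_def by simp
    also have "\<dots> = y - (\<Sum>k\<in>K. op_mult (g k) (cc k))"
    proof -
      have "(\<Sum>k\<in>K. op_mult (op_scale (-1) (g k)) (cc k)) = (\<Sum>k\<in>K. - op_mult (g k) (cc k))"
      proof (rule sum.cong[OF refl])
        fix k assume k: "k \<in> K"
        show "op_mult (op_scale (-1) (g k)) (cc k) = - op_mult (g k) (cc k)"
          using mscale_l[OF cM[OF k], of "-1" "g k"] op_scale_m1 by metis
      qed
      then show ?thesis using mone_r[OF A_M[OF psubset(3)]] by (simp add: sum_negf)
    qed
    also have "\<dots> = 0" using psubset(6) by simp
    finally have "\<forall>q\<in>KK. a q = 0" using Ldisj[OF fKK aA bAc ind] by blast
    then have "y = 0" unfolding KK_def a_def by simp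
    then show ?thesis using V(2) by (simp only:)
  qed
qed

end

lemma linf_set: "{\<bar>s ! i - t ! i\<bar> | i. i < n} = (\<lambda>i. \<bar>s ! i - t ! i\<bar>) ` {..<n}"
  by auto

lemma linf_nonneg: "0 \<le> linf_dist s t"
  unfolding linf_dist_def linf_set by (rule Max_ge) auto

lemma linf_le: "i < length s \<Longrightarrow> i < length t \<Longrightarrow> \<bar>s ! i - t ! i\<bar> \<le> linf_dist s t"
  unfolding linf_dist_def linf_set by (rule Max_ge) auto

lemma linf_bound: assumes "0 \<le> c" "\<And>i. i < length s \<Longrightarrow> i < length t \<Longrightarrow> \<bar>s ! i - t ! i\<bar> \<le> c"
  shows "linf_dist s t \<le> c"
  unfolding linf_dist_def linf_set using assms by (subst Max_le_iff) auto

lemma linf_sym: "linf_dist s t = linf_dist t s"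
proof -
  have "(\<lambda>i. \<bar>s ! i - t ! i\<bar>) ` {..<min (length s) (length t)} = (\<lambda>i. \<bar>t ! i - s ! i\<bar>) ` {..<min (length t) (length s)}"
    by (auto simp: abs_minus_commute min.commute)
  then show ?thesis unfolding linf_dist_def linf_set by simp
qed

lemma linf_tri: assumes "length s = length t" "length t = length u"
  shows "linf_dist s u \<le> linf_dist s t + linf_dist t u"
proof (rule linf_bound)
  show "0 \<le> linf_dist s t + linf_dist t u" using linf_nonneg[of s t] linf_nonneg[of t u] by simp
  fix i assume i: "i < length s" "i < length u"
  have "\<bar>s ! i - u ! i\<bar> \<le> \<bar>s ! i - t ! i\<bar> + \<bar>t ! i - u ! i\<bar>" by simp
  also have "\<dots> \<le> linf_dist s t + linf_dist t u"
    using linf_le[of i s t] linf_le[of i t u] i assms by simp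
  finally show "\<bar>s ! i - u ! i\<bar> \<le> linf_dist s t + linf_dist t u" .
qed

lemma thicken_mono: "S \<subseteq> T \<Longrightarrow> thicken D S l \<subseteq> thicken D T l"
  unfolding thicken_def by blast

lemma diam_thicken: assumes "X \<subseteq> thicken D {s} l" "s \<in> sites D"
  shows "diam_le X (2 * l)"
  unfolding diam_le_def
proof (intro ballI)
  fix t1 t2 assume t: "t1 \<in> X" "t2 \<in> X"
  then have t': "t1 \<in> sites D" "t2 \<in> sites D" "linf_dist s t1 \<le> int l" "linf_dist s t2 \<le> int l"
    using assms unfolding thicken_def by auto
  have "linf_dist t1 t2 \<le> linf_dist t1 s + linf_dist s t2"
    by (rule linf_tri) (use assms(2) t' in \<open>auto simp: sites_def\<close>)
  then show "linf_dist t1 t2 \<le> int (2 * l)" using t' linf_sym[of t1 s] by simp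
qed

context inv begin

lemma Supp_sub: "loc S x \<Longrightarrow> Supp D p x \<subseteq> S"
  unfolding Supp_def by blast

lemma sp_sum_list: "(\<And>x. x \<in> set xs \<Longrightarrow> x \<in> sp V) \<Longrightarrow> sum_list xs \<in> sp V"
  by (induction xs) (auto intro: sp_zero sp_add)

lemma sp_mult: assumes VA: "V \<subseteq> A" and Vm: "\<And>x y. x \<in> V \<Longrightarrow> y \<in> V \<Longrightarrow> op_mult x y \<in> V"
  and s: "s \<in> sp V" and t: "t \<in> sp V"
  shows "op_mult s t \<in> sp V"
proof -
  obtain xs where xs: "set xs \<subseteq> V \<times> Ac" "s = sum_list (map (\<lambda>(i,b). op_mult i b) xs)"
    using s unfolding sp_def by blast
  obtain ys where ys: "set ys \<subseteq> V \<times> Ac" "t = sum_list (map (\<lambda>(i,b). op_mult i b) ys)"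
    using t unfolding sp_def by blast
  have tM: "t \<in> M" using sp_M[OF VA t] .
  have one: "op_mult (op_mult g c) t \<in> sp V" if gc: "(g, c) \<in> set xs" for g c
  proof -
    have gcV: "g \<in> V" "c \<in> Ac" using gc xs(1) by auto
    have gA: "g \<in> A" using gcV VA by blast
    have gcM: "op_mult g c \<in> M" using Mat_mult[OF A_M[OF gA] Ac_M[OF gcV(2)]] .
    let ?zs = "map (\<lambda>(i,d). (op_mult g i, op_mult c d)) ys"
    have zs: "set ?zs \<subseteq> V \<times> Ac" using ys(1) gcV Vm Ac_mult by auto
    have "op_mult (op_mult g c) t = sum_list (map (op_mult (op_mult g c)) (map (\<lambda>(i,b). op_mult i b) ys))"
      unfolding ys(2) by (rule msum_list_r[OF gcM])
    also have "\<dots> = sum_list (map (\<lambda>(i,b). op_mult i b) ?zs)"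
    proof -
      have "map (op_mult (op_mult g c)) (map (\<lambda>(i,b). op_mult i b) ys) = map (\<lambda>(i,b). op_mult i b) ?zs"
      proof (rule nth_equalityI)
        fix j assume "j < length (map (op_mult (op_mult g c)) (map (\<lambda>(i,b). op_mult i b) ys))"
        then have j: "j < length ys" by simp
        obtain i d where id: "ys ! j = (i, d)" by fastforce
        have "(i, d) \<in> V \<times> Ac" using ys(1) j id nth_mem by fastforce
        then have "i \<in> A" "d \<in> Ac" using VA by auto
        then show "map (op_mult (op_mult g c)) (map (\<lambda>(i,b). op_mult i b) ys) ! j = map (\<lambda>(i,b). op_mult i b) ?zs ! j"
          using j id swap4[OF gA _ gcV(2)] by simp
      qed simp
      then show ?thesis by (rule arg_cong)
    qed
    finally show ?thesis using zs unfolding sp_def by blast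
  qed
  have "op_mult s t = sum_list (map (\<lambda>y. op_mult y t) (map (\<lambda>(i,b). op_mult i b) xs))"
    unfolding xs(2) by (rule msum_list_l[OF tM])
  also have "\<dots> \<in> sp V"
  proof (rule sp_sum_list)
    fix z assume "z \<in> set (map (\<lambda>y. op_mult y t) (map (\<lambda>(i,b). op_mult i b) xs))"
    then obtain q where q: "q \<in> set xs" "z = op_mult ((\<lambda>(i,b). op_mult i b) q) t" by auto
    obtain g c where "q = (g, c)" by fastforce
    then show "z \<in> sp V" using q one by simp
  qed
  finally show ?thesis .
qed

lemma locgen: "locally_generated D p A"
proof -
  from invA obtain l where l0: "l > 0" and L: "\<forall>x\<in>M. \<exists>(n::nat) a b. (\<forall>i<n. a i \<in> A \<and> b i \<in> Ac \<and>
               Supp D p (a i) \<subseteq> thicken D (Supp D p x) l \<and> Supp D p (b i) \<subseteq> thicken D (Supp D p x) l) \<and>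
        x = (\<Sum>i<n. op_mult (a i) (b i))"
    unfolding invertible_subalg_def by blast
  define G where "G = {a \<in> A. diam_le (Supp D p a) (2 * l)}"
  have GA: "G \<subseteq> A" unfolding G_def by blast
  have Gd: "\<forall>g\<in>G. diam_le (Supp D p g) (2 * l)" unfolding G_def by blast
  have "A = generated_subalg D p G"
  proof
    show "generated_subalg D p G \<subseteq> A" unfolding generated_subalg_def using usub GA by blast
  next
    show "A \<subseteq> generated_subalg D p G"
      unfolding generated_subalg_def
    proof (intro subsetI InterI)
      fix y B assume yA: "y \<in> A" and "B \<in> {B. unital_star_subalg D p B \<and> G \<subseteq> B}"
      then have B: "unital_star_subalg D p B" "G \<subseteq> B" by auto
      define V where "V = A \<inter> B"
      have VA: "V \<subseteq> A" unfolding V_def by blast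
      have Bone: "one \<in> B" using B(1) by (simp add: unital_star_subalg_def)
      have Badd: "\<And>x y. x \<in> B \<Longrightarrow> y \<in> B \<Longrightarrow> x + y \<in> B" using B(1) by (simp add: unital_star_subalg_def)
      have Bmult: "\<And>x y. x \<in> B \<Longrightarrow> y \<in> B \<Longrightarrow> op_mult x y \<in> B" using B(1) by (simp add: unital_star_subalg_def)
      have Bscale: "\<And>c x. x \<in> B \<Longrightarrow> op_scale c x \<in> B" using B(1) by (simp add: unital_star_subalg_def)
      have V0: "0 \<in> V" unfolding V_def using A_zero Bscale[OF Bone, of 0] by simp
      have Vone: "one \<in> V" unfolding V_def using A_one Bone by simp
      have Vadd: "\<And>x y. x \<in> V \<Longrightarrow> y \<in> V \<Longrightarrow> x + y \<in> V" unfolding V_def using A_add Badd by blast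
      have Vmult: "\<And>x y. x \<in> V \<Longrightarrow> y \<in> V \<Longrightarrow> op_mult x y \<in> V" unfolding V_def using A_mult Bmult by blast
      have Vscale: "\<And>c x. x \<in> V \<Longrightarrow> op_scale c x \<in> V" unfolding V_def using A_scale Bscale by blast
      have GV: "G \<subseteq> V" unfolding V_def using GA B(2) by blast
      have one_sp: "one \<in> sp V" using sp_base[OF Vone Ac_one] mone_r[OF Mat_one] by simp
      have scale_sp: "op_scale d s \<in> sp V" if s: "s \<in> sp V" for d s
      proof -
        have sM: "s \<in> M" using sp_M[OF VA s] .
        have "op_scale d one \<in> sp V" using sp_base[OF Vscale[OF Vone] Ac_one] mone_r[OF Mat_scale[OF Mat_one]] by simp
        then have "op_mult (op_scale d one) s \<in> sp V" using sp_mult[OF VA Vmult _ s] by blast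
        then show ?thesis using mscale_l[OF sM] mone_l[OF sM] by simp
      qed
      have E1: "EU {s} \<alpha> \<beta> \<in> sp V" if s: "s \<in> sites D" for s \<alpha> \<beta>
      proof -
        let ?x = "EU {s} \<alpha> \<beta>"
        have xl: "loc {s} ?x" using loc_EU[of "{s}"] s by simp
        have xM: "?x \<in> M" using Mat_loc[OF xl] .
        have Sx: "Supp D p ?x \<subseteq> {s}" using Supp_sub[OF xl] .
        obtain n :: nat and a b where ab: "\<forall>i<n. a i \<in> A \<and> b i \<in> Ac \<and>
               Supp D p (a i) \<subseteq> thicken D (Supp D p ?x) l \<and> Supp D p (b i) \<subseteq> thicken D (Supp D p ?x) l"
          and xe: "?x = (\<Sum>i<n. op_mult (a i) (b i))"
          using L xM by blast
        have "a i \<in> V \<and> b i \<in> Ac" if i: "i < n" for i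
        proof -
          have "Supp D p (a i) \<subseteq> thicken D {s} l" using ab i thicken_mono[OF Sx] by blast
          then have "diam_le (Supp D p (a i)) (2 * l)" using diam_thicken s by blast
          then have "a i \<in> G" unfolding G_def using ab i by blast
          then show ?thesis using GV ab i by blast
        qed
        then have "(\<Sum>i<n. op_mult (a i) (b i)) \<in> sp V" by (intro sp_sum sp_base) auto
        then show ?thesis using xe by simp
      qed
      have EU_sp: "finite U \<Longrightarrow> U \<subseteq> sites D \<Longrightarrow> \<beta> \<in> Cf \<Longrightarrow> EU U \<alpha> \<beta> \<in> sp V" for U \<alpha> \<beta>
      proof (induction U rule: finite_induct)
        case empty then show ?case using one_sp EU_empty by simp
      next
        case (insert s U)
        have "EU (insert s U) \<alpha> \<beta> = op_mult (EU {s} \<alpha> \<beta>) (EU U \<alpha> \<beta>)"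
          by (rule EU_insert) (use insert in auto)
        moreover have "op_mult (EU {s} \<alpha> \<beta>) (EU U \<alpha> \<beta>) \<in> sp V"
          by (rule sp_mult[OF VA Vmult E1]) (use insert in auto)
        ultimately show ?case by simp
      qed
      have yM: "y \<in> M" using A_M[OF yA] .
      obtain U where yU: "loc U y" using yM[unfolded Mat_iff] by blast
      have U: "finite U" "U \<subseteq> sites D" using loc_fin[OF yU] loc_sub[OF yU] by auto
      have "(\<Sum>\<alpha>\<in>Cfg U. \<Sum>\<beta>\<in>Cfg U. op_scale (y \<alpha> \<beta>) (EU U \<alpha> \<beta>)) \<in> sp V"
        by (intro sp_sum scale_sp EU_sp U) (auto simp: Nb_def)
      then have ysp: "y \<in> sp V" using expansion[OF yU] by simp
      then obtain xs where xs: "set xs \<subseteq> V \<times> Ac" "y = sum_list (map (\<lambda>(i,b). op_mult i b) xs)"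
        unfolding sp_def by blast
      define g where "g k = fst (xs ! k)" for k
      define cc where "cc k = snd (xs ! k)" for k
      have gc: "g k \<in> V \<and> cc k \<in> Ac" if "k < length xs" for k
      proof -
        have "xs ! k \<in> V \<times> Ac" using xs(1) nth_mem[of k xs] that by blast
        then show ?thesis unfolding g_def cc_def by (simp add: mem_Times_iff)
      qed
      have ye: "y = (\<Sum>k\<in>{..<length xs}. op_mult (g k) (cc k))"
        using xs(2) unfolding sum_list_nth g_def cc_def by (simp add: case_prod_beta)
      have "y \<in> V"
        by (rule KEY[OF VA V0 Vadd Vscale _ yA _ _ ye]) (use gc in auto)
      then show "y \<in> B" unfolding V_def by blast
    qed
  qed
  moreover have "(0::nat) < 2 * l" using l0 by simp
  ultimately show ?thesis unfolding locally_generated_def using GA Gd by blast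
qed

end

theorem proposition2p6:
  fixes D :: nat and p :: "site \<Rightarrow> nat" and A :: "op set"
  assumes "\<forall>s \<in> sites D. p s > 0"
    and "invertible_subalg D p A"
  shows "central_subalg D p A \<and> simple_subalg A \<and> locally_generated D p A"
proof -
  interpret inv D p A by unfold_locales (use assms in auto)
  show ?thesis using central simple locgen by blast
qed

end
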